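(* Let $(u_n)_{n \geq 1}$ be a virtual isometry. For each $n$, write the eigenvalues of $u_n$ as $e^{i\theta^{(n)}_1},\dots,e^{i\theta^{(n)}_n}$ with $0\le\theta^{(n)}_1\le\dots\le\theta^{(n)}_n<2\pi$, let $(f^{(n)}_k)_{1\le k\le n}$ be an orthonormal basis of $\mathbb{C}^n$ with $u_n f^{(n)}_k = e^{i\theta^{(n)}_k} f^{(n)}_k$, and write $x_{n+1} := u_{n+1}(e_{n+1}) = \sum_{k=1}^n \mu^{(n)}_k f^{(n)}_k + \nu_n e_{n+1}$. Assume $u_1 \neq 1$, $\nu_n \neq 0$ for all $n \ge 1$, and $\mu^{(n)}_k \neq 0$ for all $n\ge1$, $k\in\{1,\dots,n\}$. Then for all $n\ge1$ and $k \in\{1,\dots,n\}$, the quantities $\rho_n := |\nu_n| \in (0,1)$, $\psi_n := \mathrm{Arg}(\nu_n) \in (-\pi,\pi]$ and $\gamma^{(n)}_k := |\mu^{(n)}_k|^2/(1 - |\nu_n|^2)$ are well-defined, and $\sum_{k=1}^n \gamma^{(n)}_k = 1$. Moreover, for all $n \geq 1$, the function $$\Phi(\eta) := (1+\rho_n^2)\cos(\eta/2) - 2\rho_n\cos(\eta/2 - \psi_n) + (1-\rho_n^2)\sin(\eta/2)\sum_{k=1}^n \gamma^{(n)}_k \cot\left(\frac{\eta - \theta^{(n)}_k}{2}\right),$$ defined for $\eta \in [0,2\pi]\setminus\{\theta^{(n)}_k : 1\le k\le n\}$, vanishes if and only if $\eta = \theta^{(n+1)}_k$ for some $k\in\{1,\dots,n+1\}$,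 and $$0 < \theta^{(n+1)}_1 < \theta^{(n)}_1 < \theta^{(n+1)}_2 < \theta^{(n)}_2 < \dots < \theta^{(n+1)}_n < \theta^{(n)}_n < \theta^{(n+1)}_{n+1} < 2\pi.$$
   Context: Let $(e_k)$ be the canonical basis of $\ell^2$; identify $\mathbb{C}^n$ with the span of $e_1,\dots,e_n$ and $U(n)$ with the unitary operators fixing every $e_k$, $k>n$. For $n\ge m\ge1$ and $u\in U(n)$, $\pi_{n,m}(u)$ is the unique $v\in U(m)$ such that the range of $u-v$ is contained in $(u-\mathrm{Id})(\mathrm{span}\{e_k:k>m\})$ (existence and uniqueness are known). A virtual isometry is a sequence $(u_n)_{n\ge1}$ with $u_n\in U(n)$ and $\pi_{n+1,n}(u_{n+1})=u_n$ for all $n\ge1$. *)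

theory Defs
  imports Complex_Main
begin

text \<open>Vectors of l2 are functions
  nat => complex, indexed from 1 (index 0 is unused).  Every operator in U(n)
  fixes e_k for k > n, so it is determined by an n x n block; we represent it
  by a matrix nat => nat => complex which equals the identity outside the
  block {1..n} x {1..n}.\<close>

definition evec :: "nat \<Rightarrow> nat \<Rightarrow> complex" where
  "evec k = (\<lambda>i. if i = k then 1 else 0)"

definition idm :: "nat \<Rightarrow> nat \<Rightarrow> complex" where
  "idm = (\<lambda>i j. if i = j then 1 else 0)"

definition Cn :: "nat \<Rightarrow> (nat \<Rightarrow> complex) set" where
  "Cn n = {x. \<forall>i. i \<notin> {1..n} \<longrightarrow> x i = 0}"

definition cinner :: "nat \<Rightarrow> (nat \<Rightarrow> complex) \<Rightarrow> (nat \<Rightarrow> complex) \<Rightarrow> complex" where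
  "cinner n x y = (\<Sum>i=1..n. x i * cnj (y i))"

definition mv :: "nat \<Rightarrow> (nat \<Rightarrow> nat \<Rightarrow> complex) \<Rightarrow> (nat \<Rightarrow> complex) \<Rightarrow> (nat \<Rightarrow> complex)" where
  "mv n A x = (\<lambda>i. if i \<in> {1..n} then (\<Sum>j=1..n. A i j * x j) else 0)"

definition Umat :: "nat \<Rightarrow> (nat \<Rightarrow> nat \<Rightarrow> complex) set" where
  "Umat n = {A. (\<forall>i j. (i \<notin> {1..n} \<or> j \<notin> {1..n}) \<longrightarrow> A i j = idm i j)
             \<and> (\<forall>i\<in>{1..n}. \<forall>j\<in>{1..n}. (\<Sum>k=1..n. cnj (A k i) * A k j) = idm i j)
             \<and> (\<forall>i\<in>{1..n}. \<forall>j\<in>{1..n}. (\<Sum>k=1..n. A i k * cnj (A j k)) = idm i j)}"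

text \<open>pi_{n,m}(u): the unique v in U(m) with range(u - v) contained in
  (u - Id)(span{e_k : k > m}).  Since u and v both act as the identity on
  e_k for k > n, both sides only involve C^n, and
  (u - Id)(span{e_k : k > m}) = (u - Id)(span{e_k : m < k <= n}).\<close>
definition pi_proj :: "nat \<Rightarrow> nat \<Rightarrow> (nat \<Rightarrow> nat \<Rightarrow> complex) \<Rightarrow> (nat \<Rightarrow> nat \<Rightarrow> complex)" where
  "pi_proj n m u = (THE v. v \<in> Umat m \<and>
      (\<forall>x\<in>Cn n. \<exists>y\<in>Cn n. (\<forall>i\<in>{1..m}. y i = 0) \<and>
          (\<lambda>i. mv n u x i - mv n v x i) = (\<lambda>i. mv n u y i - y i)))"

definition virtual_isometry :: "(nat \<Rightarrow> nat \<Rightarrow> nat \<Rightarrow> complex) \<Rightarrow> bool" where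
  "virtual_isometry u \<longleftrightarrow> (\<forall>n\<ge>1. u n \<in> Umat n \<and> pi_proj (n+1) n (u (n+1)) = u n)"

definition orthonormal_basis :: "nat \<Rightarrow> (nat \<Rightarrow> nat \<Rightarrow> complex) \<Rightarrow> bool" where
  "orthonormal_basis n b \<longleftrightarrow> (\<forall>k\<in>{1..n}. b k \<in> Cn n)
     \<and> (\<forall>k\<in>{1..n}. \<forall>l\<in>{1..n}. cinner n (b k) (b l) = idm k l)
     \<and> (\<forall>x\<in>Cn n. \<exists>c. x = (\<lambda>i. \<Sum>k=1..n. c k * b k i))"

end

theory Submission
  imports Defs
begin


lemma cinner_restrict_expand:
  assumes "orthonormal_basis n F" "i \<in> {1..n}"
  shows "p i = (\<Sum>k=1..n. cinner n p (F k) * F k i)"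
proof -
  define p' where "p' = (\<lambda>i. if i \<in> {1..n} then p i else 0)"
  have "p' \<in> Cn n" by (auto simp: p'_def Cn_def)
  then obtain c where c: "p' = (\<lambda>i. \<Sum>k=1..n. c k * F k i)" using assms(1) unfolding orthonormal_basis_def by blast
  have ci: "cinner n p (F l) = c l" if l: "l \<in> {1..n}" for l
  proof -
    have "cinner n p (F l) = cinner n p' (F l)" unfolding cinner_def by (rule sum.cong) (auto simp: p'_def)
    also have "\<dots> = (\<Sum>i=1..n. \<Sum>k=1..n. c k * F k i * cnj (F l i))"
      unfolding cinner_def c by (simp add: sum_distrib_right)
    also have "\<dots> = (\<Sum>k=1..n. c k * cinner n (F k) (F l))"
      unfolding cinner_def by (subst sum.swap) (simp add: sum_distrib_left mult.assoc)
    also have "\<dots> = (\<Sum>k=1..n. c k * idm k l)"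
      using assms(1) l unfolding orthonormal_basis_def by (intro sum.cong) auto
    also have "\<dots> = c l" using l by (simp add: idm_def if_distrib cong: if_cong)
    finally show ?thesis .
  qed
  have "p i = p' i" using assms(2) by (simp add: p'_def)
  also have "\<dots> = (\<Sum>k=1..n. c k * F k i)" by (simp add: c)
  also have "\<dots> = (\<Sum>k=1..n. cinner n p (F k) * F k i)" by (intro sum.cong) (auto simp: ci)
  finally show ?thesis .
qed

lemma parseval:
  assumes "orthonormal_basis n F"
  shows "cinner n p q = (\<Sum>k=1..n. cinner n p (F k) * cnj (cinner n q (F k)))"
proof -
  have "cinner n p q = (\<Sum>i=1..n. p i * cnj (q i))" by (simp add: cinner_def)
  also have "\<dots> = (\<Sum>i=1..n. (\<Sum>k=1..n. cinner n p (F k) * F k i) * cnj (q i))"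
  proof (rule sum.cong[OF refl])
    fix i assume "i \<in> {1..n}"
    from cinner_restrict_expand[OF assms this, of p] show "p i * cnj (q i) = (\<Sum>k=1..n. cinner n p (F k) * F k i) * cnj (q i)"
      by simp
  qed
  also have "\<dots> = (\<Sum>i=1..n. \<Sum>k=1..n. cinner n p (F k) * (F k i * cnj (q i)))"
    by (simp add: sum_distrib_right mult.assoc)
  also have "\<dots> = (\<Sum>k=1..n. \<Sum>i=1..n. cinner n p (F k) * (F k i * cnj (q i)))"
    by (rule sum.swap)
  also have "\<dots> = (\<Sum>k=1..n. cinner n p (F k) * (\<Sum>i=1..n. F k i * cnj (q i)))"
    by (simp add: sum_distrib_left)
  also have "\<dots> = (\<Sum>k=1..n. cinner n p (F k) * cnj (cinner n q (F k)))"
    unfolding cinner_def by (simp add: mult.commute)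
  finally show ?thesis .
qed

lemma cinner_self_real: "cinner n p p = of_real (\<Sum>i=1..n. (cmod (p i))^2)"
  unfolding cinner_def by (simp add: complex_norm_square[symmetric])

lemma cinner_self_zero:
  assumes "cinner n p p = 0" "i \<in> {1..n}" shows "p i = 0"
proof -
  have "(\<Sum>i=1..n. (cmod (p i))^2) = 0" using assms(1) cinner_self_real[of n p] by (metis of_real_eq_0_iff)
  hence "(cmod (p i))^2 = 0" using assms(2) by (subst (asm) sum_nonneg_eq_0_iff) auto
  thus ?thesis by simp
qed

lemma parseval_self:
  assumes "orthonormal_basis n F"
  shows "cinner n p p = of_real (\<Sum>k=1..n. (cmod (cinner n p (F k)))^2)"
  by (subst parseval[OF assms]) (simp add: complex_norm_square[symmetric])


lemma mv_lin2: "mv N A (\<lambda>i. a * p i + b * q i) = (\<lambda>i. a * mv N A p i + b * mv N A q i)"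
  unfolding mv_def by (auto simp: sum.distrib sum_distrib_left algebra_simps)

lemma mv_scale: "mv N A (\<lambda>i. a * p i) = (\<lambda>i. a * mv N A p i)"
  unfolding mv_def by (auto simp: sum_distrib_left algebra_simps)

lemma mv_sum:
  "mv N A (\<lambda>i. \<Sum>k\<in>K. c k * F k i) = (\<lambda>i. \<Sum>k\<in>K. c k * mv N A (F k) i)"
proof -
  have "(\<Sum>j=1..N. A i j * (\<Sum>k\<in>K. c k * F k j)) = (\<Sum>k\<in>K. c k * (\<Sum>j=1..N. A i j * F k j))" for i
  proof -
    have "(\<Sum>j=1..N. A i j * (\<Sum>k\<in>K. c k * F k j)) = (\<Sum>j=1..N. \<Sum>k\<in>K. c k * (A i j * F k j))"
      by (simp add: sum_distrib_left mult.left_commute)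
    also have "\<dots> = (\<Sum>k\<in>K. \<Sum>j=1..N. c k * (A i j * F k j))" by (rule sum.swap)
    also have "\<dots> = (\<Sum>k\<in>K. c k * (\<Sum>j=1..N. A i j * F k j))" by (simp add: sum_distrib_left)
    finally show ?thesis .
  qed
  thus ?thesis unfolding mv_def by (auto intro!: ext)
qed

lemma Umat_col: "A \<in> Umat N \<Longrightarrow> i \<in> {1..N} \<Longrightarrow> j \<in> {1..N} \<Longrightarrow> (\<Sum>k=1..N. cnj (A k i) * A k j) = idm i j"
  unfolding Umat_def by blast

lemma Umat_row: "A \<in> Umat N \<Longrightarrow> i \<in> {1..N} \<Longrightarrow> j \<in> {1..N} \<Longrightarrow> (\<Sum>k=1..N. A i k * cnj (A j k)) = idm i j"
  unfolding Umat_def by blast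

lemma Umat_out: "A \<in> Umat N \<Longrightarrow> i \<notin> {1..N} \<or> j \<notin> {1..N} \<Longrightarrow> A i j = idm i j"
  unfolding Umat_def by blast

lemma unitary_cinner:
  assumes "A \<in> Umat N"
  shows "cinner N (mv N A p) (mv N A q) = cinner N p q"
proof -
  have "cinner N (mv N A p) (mv N A q) = (\<Sum>i=1..N. (\<Sum>j=1..N. A i j * p j) * cnj (\<Sum>l=1..N. A i l * q l))"
    unfolding cinner_def mv_def by (intro sum.cong) auto
  also have "\<dots> = (\<Sum>i=1..N. \<Sum>l=1..N. \<Sum>j=1..N. p j * cnj (q l) * (cnj (A i l) * A i j))"
    by (simp add: sum_distrib_left sum_distrib_right mult_ac)
  also have "\<dots> = (\<Sum>l=1..N. \<Sum>i=1..N. \<Sum>j=1..N. p j * cnj (q l) * (cnj (A i l) * A i j))"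
    by (rule sum.swap)
  also have "\<dots> = (\<Sum>l=1..N. \<Sum>j=1..N. \<Sum>i=1..N. p j * cnj (q l) * (cnj (A i l) * A i j))"
    by (rule sum.cong[OF refl], rule sum.swap)
  also have "\<dots> = (\<Sum>l=1..N. \<Sum>j=1..N. p j * cnj (q l) * idm l j)"
    by (intro sum.cong refl) (simp add: sum_distrib_left[symmetric] Umat_col[OF assms, simplified])
  also have "\<dots> = (\<Sum>l=1..N. p l * cnj (q l))"
    by (intro sum.cong refl) (simp add: idm_def if_distrib cong: if_cong)
  finally show ?thesis unfolding cinner_def .
qed


definition v0 :: "nat \<Rightarrow> (nat\<Rightarrow>nat\<Rightarrow>complex) \<Rightarrow> (nat\<Rightarrow>nat\<Rightarrow>complex)" where
  "v0 n U = (\<lambda>i j. if i \<in> {1..n} \<and> j \<in> {1..n}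
      then U i j - U i (Suc n) * U (Suc n) j / (U (Suc n) (Suc n) - 1) else idm i j)"

lemma key_scalar:
  fixes \<nu> :: complex assumes "\<nu> \<noteq> 1"
  shows "-1 + \<nu> / (\<nu> - 1) + cnj \<nu> / (cnj \<nu> - 1) + (1 - cnj \<nu> * \<nu>) / ((\<nu> - 1) * (cnj \<nu> - 1)) = 0"
proof -
  have d1: "\<nu> - 1 \<noteq> 0" using assms by simp
  have d2: "cnj \<nu> - 1 \<noteq> 0" using assms by (metis complex_cnj_one_iff eq_iff_diff_eq_0)
  define a where "a = \<nu> - 1"
  have a1: "a \<noteq> 0" "cnj a \<noteq> 0" using d1 d2 by (auto simp: a_def)
  have nu: "\<nu> = a + 1" by (simp add: a_def)
  show ?thesis unfolding nu using a1 by (simp add: field_simps)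
qed

lemma v0_col:
  assumes U: "U \<in> Umat (Suc n)" and nu: "U (Suc n) (Suc n) \<noteq> 1"
    and i: "i \<in> {1..n}" and j: "j \<in> {1..n}"
  shows "(\<Sum>k=1..n. cnj (v0 n U k i) * v0 n U k j) = idm i j"
proof -
  define m where "m = Suc n"
  define \<nu> where "\<nu> = U m m"
  define d where "d = \<nu> - 1"
  have d1: "d \<noteq> 0" using nu by (simp add: d_def \<nu>_def m_def)
  have d2: "cnj d \<noteq> 0" using d1 by simp
  have im: "i \<in> {1..m}" "j \<in> {1..m}" "m \<in> {1..m}" using i j by (auto simp: m_def)
  have col: "(\<Sum>k=1..n. cnj (U k a) * U k b) = idm a b - cnj (U m a) * U m b" if "a \<in> {1..m}" "b \<in> {1..m}" for a b
    using Umat_col[OF U, of a b] that by (simp add: m_def eq_diff_eq)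
  have ex: "cnj (v0 n U k i) * v0 n U k j =
      cnj (U k i) * U k j - (U m j / d) * (cnj (U k i) * U k m)
      - (cnj (U m i) / cnj d) * (cnj (U k m) * U k j)
      + (cnj (U m i) * U m j / (d * cnj d)) * (cnj (U k m) * U k m)" if k: "k \<in> {1..n}" for k
    using i j k d1 d2 by (simp add: v0_def m_def[symmetric] \<nu>_def[symmetric] d_def[symmetric] field_simps)
  have "(\<Sum>k=1..n. cnj (v0 n U k i) * v0 n U k j) = (\<Sum>k=1..n.
      cnj (U k i) * U k j - (U m j / d) * (cnj (U k i) * U k m)
      - (cnj (U m i) / cnj d) * (cnj (U k m) * U k j)
      + (cnj (U m i) * U m j / (d * cnj d)) * (cnj (U k m) * U k m))"
    by (rule sum.cong[OF refl ex])
  also have "\<dots> =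
      (\<Sum>k=1..n. cnj (U k i) * U k j) - (U m j / d) * (\<Sum>k=1..n. cnj (U k i) * U k m)
      - (cnj (U m i) / cnj d) * (\<Sum>k=1..n. cnj (U k m) * U k j)
      + (cnj (U m i) * U m j / (d * cnj d)) * (\<Sum>k=1..n. cnj (U k m) * U k m)"
    by (simp only: sum.distrib sum_subtractf sum_distrib_left)
  also have "\<dots> = (idm i j - cnj (U m i) * U m j) - (U m j / d) * (- cnj (U m i) * \<nu>)
      - (cnj (U m i) / cnj d) * (- cnj \<nu> * U m j)
      + (cnj (U m i) * U m j / (d * cnj d)) * (1 - cnj \<nu> * \<nu>)"
    using i j unfolding col[OF im(1) im(2)] col[OF im(1) im(3)] col[OF im(3) im(2)] col[OF im(3) im(3)]
    by (simp add: idm_def \<nu>_def m_def)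
  also have "\<dots> = idm i j + cnj (U m i) * U m j *
      (-1 + \<nu> / (\<nu> - 1) + cnj \<nu> / (cnj \<nu> - 1) + (1 - cnj \<nu> * \<nu>) / ((\<nu> - 1) * (cnj \<nu> - 1)))"
    by (simp add: d_def field_simps)
  also have "\<dots> = idm i j" using key_scalar nu by (simp add: \<nu>_def m_def)
  finally show ?thesis .
qed

lemma v0_row:
  assumes U: "U \<in> Umat (Suc n)" and nu: "U (Suc n) (Suc n) \<noteq> 1"
    and i: "i \<in> {1..n}" and j: "j \<in> {1..n}"
  shows "(\<Sum>k=1..n. v0 n U i k * cnj (v0 n U j k)) = idm i j"
proof -
  define m where "m = Suc n"
  define \<nu> where "\<nu> = U m m"
  define d where "d = \<nu> - 1"
  have d1: "d \<noteq> 0" using nu by (simp add: d_def \<nu>_def m_def)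
  have d2: "cnj d \<noteq> 0" using d1 by simp
  have im: "i \<in> {1..m}" "j \<in> {1..m}" "m \<in> {1..m}" using i j by (auto simp: m_def)
  have row: "(\<Sum>k=1..n. U a k * cnj (U b k)) = idm a b - U a m * cnj (U b m)" if "a \<in> {1..m}" "b \<in> {1..m}" for a b
    using Umat_row[OF U, of a b] that by (simp add: m_def eq_diff_eq)
  have ex: "v0 n U i k * cnj (v0 n U j k) =
      U i k * cnj (U j k) - (U i m / d) * (U m k * cnj (U j k))
      - (cnj (U j m) / cnj d) * (U i k * cnj (U m k))
      + (U i m * cnj (U j m) / (d * cnj d)) * (U m k * cnj (U m k))" if k: "k \<in> {1..n}" for k
    using i j k d1 d2 by (simp add: v0_def m_def[symmetric] \<nu>_def[symmetric] d_def[symmetric] field_simps)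
  have "(\<Sum>k=1..n. v0 n U i k * cnj (v0 n U j k)) = (\<Sum>k=1..n.
      U i k * cnj (U j k) - (U i m / d) * (U m k * cnj (U j k))
      - (cnj (U j m) / cnj d) * (U i k * cnj (U m k))
      + (U i m * cnj (U j m) / (d * cnj d)) * (U m k * cnj (U m k)))"
    by (rule sum.cong[OF refl ex])
  also have "\<dots> =
      (\<Sum>k=1..n. U i k * cnj (U j k)) - (U i m / d) * (\<Sum>k=1..n. U m k * cnj (U j k))
      - (cnj (U j m) / cnj d) * (\<Sum>k=1..n. U i k * cnj (U m k))
      + (U i m * cnj (U j m) / (d * cnj d)) * (\<Sum>k=1..n. U m k * cnj (U m k))"
    by (simp only: sum.distrib sum_subtractf sum_distrib_left)
  also have "\<dots> = (idm i j - U i m * cnj (U j m)) - (U i m / d) * (- \<nu> * cnj (U j m))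
      - (cnj (U j m) / cnj d) * (- U i m * cnj \<nu>)
      + (U i m * cnj (U j m) / (d * cnj d)) * (1 - \<nu> * cnj \<nu>)"
    using i j unfolding row[OF im(1) im(2)] row[OF im(1) im(3)] row[OF im(3) im(2)] row[OF im(3) im(3)]
    by (simp add: idm_def \<nu>_def m_def)
  also have "\<dots> = idm i j + U i m * cnj (U j m) *
      (-1 + \<nu> / (\<nu> - 1) + cnj \<nu> / (cnj \<nu> - 1) + (1 - cnj \<nu> * \<nu>) / ((\<nu> - 1) * (cnj \<nu> - 1)))"
    by (simp add: d_def field_simps)
  also have "\<dots> = idm i j" using key_scalar nu by (simp add: \<nu>_def m_def)
  finally show ?thesis .
qed

lemma v0_Umat:
  assumes U: "U \<in> Umat (Suc n)" and nu: "U (Suc n) (Suc n) \<noteq> 1"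
  shows "v0 n U \<in> Umat n"
proof -
  have "v0 n U i j = idm i j" if "i \<notin> {1..n} \<or> j \<notin> {1..n}" for i j
    using that by (auto simp: v0_def)
  moreover have "\<forall>i\<in>{1..n}. \<forall>j\<in>{1..n}. (\<Sum>k=1..n. cnj (v0 n U k i) * v0 n U k j) = idm i j"
    using v0_col[OF U nu] by blast
  moreover have "\<forall>i\<in>{1..n}. \<forall>j\<in>{1..n}. (\<Sum>k=1..n. v0 n U i k * cnj (v0 n U j k)) = idm i j"
    using v0_row[OF U nu] by blast
  ultimately show ?thesis unfolding Umat_def by blast
qed


definition Pp :: "nat \<Rightarrow> (nat\<Rightarrow>nat\<Rightarrow>complex) \<Rightarrow> (nat\<Rightarrow>nat\<Rightarrow>complex) \<Rightarrow> bool" where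
  "Pp n U v \<longleftrightarrow> (\<forall>x\<in>Cn (Suc n). \<exists>y\<in>Cn (Suc n). (\<forall>i\<in>{1..n}. y i = 0) \<and>
          (\<lambda>i. mv (Suc n) U x i - mv (Suc n) v x i) = (\<lambda>i. mv (Suc n) U y i - y i))"

lemma v0_P:
  assumes U: "U \<in> Umat (Suc n)" and nu: "U (Suc n) (Suc n) \<noteq> 1"
  shows "Pp n U (v0 n U)"
  unfolding Pp_def
proof
  fix x assume x: "x \<in> Cn (Suc n)"
  define m where "m = Suc n"
  define d where "d = U m m - 1"
  have d1: "d \<noteq> 0" using nu by (simp add: d_def m_def)
  define c where "c = (\<Sum>j=1..n. U m j * x j) / d + x m"
  define y where "y = (\<lambda>i. if i = m then c else 0)"
  have y: "y \<in> Cn m" "\<forall>i\<in>{1..n}. y i = 0" by (auto simp: y_def Cn_def m_def)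
  have "mv m U x i - mv m (v0 n U) x i = mv m U y i - y i" for i
  proof (cases "i \<in> {1..m}")
    case False thus ?thesis by (auto simp: mv_def y_def m_def)
  next
    case True
    have Uy: "mv m U y i = U i m * c" using True by (simp add: mv_def y_def m_def)
    have Ux: "mv m U x i = (\<Sum>j=1..n. U i j * x j) + U i m * x m" using True by (simp add: mv_def m_def)
    show ?thesis
    proof (cases "i = m")
      case False
      hence i: "i \<in> {1..n}" using True by (auto simp: m_def)
      have "mv m (v0 n U) x i = (\<Sum>j=1..n. (U i j - U i m * U m j / d) * x j)"
        using i by (simp add: mv_def v0_def m_def d_def idm_def)
      also have "\<dots> = (\<Sum>j=1..n. U i j * x j) - U i m / d * (\<Sum>j=1..n. U m j * x j)"
        by (simp add: algebra_simps sum_subtractf sum_distrib_left)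
      finally have vx: "mv m (v0 n U) x i = (\<Sum>j=1..n. U i j * x j) - U i m / d * (\<Sum>j=1..n. U m j * x j)" .
      show ?thesis using False d1 unfolding Uy Ux vx by (simp add: y_def c_def field_simps)
    next
      case im: True
      have vx: "mv m (v0 n U) x i = x m"
        using im by (simp add: mv_def v0_def m_def idm_def)
      have Umm: "U m m = d + 1" by (simp add: d_def)
      show ?thesis using im d1 unfolding Uy Ux vx by (simp add: y_def c_def Umm field_simps)
    qed
  qed
  thus "\<exists>y\<in>Cn (Suc n). (\<forall>i\<in>{1..n}. y i = 0) \<and>
          (\<lambda>i. mv (Suc n) U x i - mv (Suc n) (v0 n U) x i) = (\<lambda>i. mv (Suc n) U y i - y i)"
    using y unfolding m_def by blast
qed

lemma mv_last:
  assumes "\<forall>l\<in>{1..n}. y l = 0"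
  shows "mv (Suc n) A y i = (if i \<in> {1..Suc n} then A i (Suc n) * y (Suc n) else 0)"
  using assms by (simp add: mv_def)

lemma mv_evec:
  assumes "j \<in> {1..N}"
  shows "mv N A (evec j) i = (if i \<in> {1..N} then A i j else 0)"
proof -
  have "(\<Sum>l=1..N. A i l * evec j l) = A i j"
    using assms by (simp add: evec_def if_distrib cong: if_cong)
  thus ?thesis by (simp add: mv_def)
qed

lemma Pp_unique:
  assumes U: "U \<in> Umat (Suc n)" and nu: "U (Suc n) (Suc n) \<noteq> 1"
    and v1: "v1 \<in> Umat n" "Pp n U v1" and v2: "v2 \<in> Umat n" "Pp n U v2"
  shows "v1 = v2"
proof (intro ext)
  fix i j
  show "v1 i j = v2 i j"
  proof (cases "i \<in> {1..n} \<and> j \<in> {1..n}")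
    case False thus ?thesis using Umat_out[OF v1(1)] Umat_out[OF v2(1)] by metis
  next
    case True
    define m where "m = Suc n"
    have jm: "j \<in> {1..m}" and im: "i \<in> {1..m}" and mm: "m \<in> {1..m}" and "i \<noteq> m"
      using True by (auto simp: m_def)
    have x: "evec j \<in> Cn (Suc n)" using jm by (auto simp: Cn_def evec_def m_def)
    have vm: "mv m v (evec j) m = 0" if "v \<in> Umat n" for v
    proof -
      have "v m j = idm m j" using Umat_out[OF that] by (simp add: m_def)
      thus ?thesis using True unfolding mv_evec[OF jm] by (simp add: idm_def m_def)
    qed
    have key: "\<exists>c. mv m v (evec j) i = mv m U (evec j) i - U i m * c \<and> mv m U (evec j) m = (U m m - 1) * c"
      if vU: "v \<in> Umat n" and vP: "Pp n U v" for v
    proof -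
      obtain y where y: "y \<in> Cn (Suc n)" "\<forall>l\<in>{1..n}. y l = 0"
        "(\<lambda>i. mv (Suc n) U (evec j) i - mv (Suc n) v (evec j) i) = (\<lambda>i. mv (Suc n) U y i - y i)"
        using vP x unfolding Pp_def by blast
      have e1: "mv m U (evec j) i - mv m v (evec j) i = U i m * y m"
        using fun_cong[OF y(3), of i] im True y(2) by (simp add: mv_last[OF y(2)] m_def)
      have e2: "mv m U (evec j) m - 0 = U m m * y m - y m"
        using fun_cong[OF y(3), of m] vm[OF vU] by (simp add: mv_last[OF y(2)] m_def)
      show ?thesis using e1 e2 by (intro exI[of _ "y m"]) (auto simp: algebra_simps)
    qed
    obtain c1 where c1: "mv m v1 (evec j) i = mv m U (evec j) i - U i m * c1" "mv m U (evec j) m = (U m m - 1) * c1"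
      using key[OF v1] by blast
    obtain c2 where c2: "mv m v2 (evec j) i = mv m U (evec j) i - U i m * c2" "mv m U (evec j) m = (U m m - 1) * c2"
      using key[OF v2] by blast
    have "U m m - 1 \<noteq> 0" using nu by (simp add: m_def)
    hence "c1 = c2" using c1(2) c2(2) by simp
    hence "mv m v1 (evec j) i = mv m v2 (evec j) i" using c1(1) c2(1) by simp
    thus ?thesis using im by (simp add: mv_evec[OF jm])
  qed
qed

lemma pi_proj_P:
  assumes U: "U \<in> Umat (Suc n)" and nu: "U (Suc n) (Suc n) \<noteq> 1"
  shows "Pp n U (pi_proj (Suc n) n U)"
proof -
  have "\<exists>!v. v \<in> Umat n \<and> Pp n U v"
    using v0_Umat[OF U nu] v0_P[OF U nu] Pp_unique[OF U nu] by blast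
  hence "pi_proj (Suc n) n U \<in> Umat n \<and> Pp n U (pi_proj (Suc n) n U)"
    unfolding pi_proj_def Pp_def[symmetric] by (rule theI')
  thus ?thesis by blast
qed


lemma cinner_lin2: "cinner n (\<lambda>i. a * p i + b * q i) r = a * cinner n p r + b * cinner n q r"
  unfolding cinner_def by (simp add: sum.distrib sum_distrib_left algebra_simps)

lemma cinner_cong: "(\<And>i. i \<in> {1..n} \<Longrightarrow> p i = p' i) \<Longrightarrow> cinner n p q = cinner n p' q"
  unfolding cinner_def by (rule sum.cong) auto

lemma cinner_Suc: "cinner (Suc n) p q = cinner n p q + p (Suc n) * cnj (q (Suc n))"
  unfolding cinner_def by simp

lemma coef_onb:
  assumes F: "orthonormal_basis n F" and k: "k \<in> {1..n}"
  shows "cinner n (\<lambda>i. \<Sum>l=1..n. c l * F l i) (F k) = c k"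
proof -
  have "cinner n (\<lambda>i. \<Sum>l=1..n. c l * F l i) (F k) = (\<Sum>i=1..n. \<Sum>l=1..n. c l * (F l i * cnj (F k i)))"
    unfolding cinner_def by (simp add: sum_distrib_right mult.assoc)
  also have "\<dots> = (\<Sum>l=1..n. \<Sum>i=1..n. c l * (F l i * cnj (F k i)))" by (rule sum.swap)
  also have "\<dots> = (\<Sum>l=1..n. c l * cinner n (F l) (F k))" by (simp add: sum_distrib_left cinner_def)
  also have "\<dots> = (\<Sum>l=1..n. c l * idm l k)"
    using F k unfolding orthonormal_basis_def by (intro sum.cong) auto
  also have "\<dots> = c k" using k by (simp add: idm_def if_distrib cong: if_cong)
  finally show ?thesis .
qed

locale level0 =
  fixes n :: nat and U V :: "nat\<Rightarrow>nat\<Rightarrow>complex" and F :: "nat \<Rightarrow> nat \<Rightarrow> complex"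
    and th :: "nat \<Rightarrow> real" and \<mu> :: "nat \<Rightarrow> complex" and \<nu> :: complex
  assumes n1: "n \<ge> 1"
    and U: "U \<in> Umat (Suc n)" and V: "V \<in> Umat n"
    and F: "orthonormal_basis n F"
    and eig: "\<forall>k\<in>{1..n}. mv n V (F k) = (\<lambda>i. exp (\<i> * complex_of_real (th k)) * F k i)"
    and dec: "mv (Suc n) U (evec (Suc n)) = (\<lambda>i. (\<Sum>k=1..n. \<mu> k * F k i) + \<nu> * evec (Suc n) i)"
    and th_range: "\<forall>k\<in>{1..n}. 0 < th k \<and> th k < 2*pi"
    and th_mono: "\<forall>k\<in>{1..n}. \<forall>l\<in>{1..n}. k < l \<longrightarrow> th k < th l"
    and mu_nz: "\<forall>k\<in>{1..n}. \<mu> k \<noteq> 0"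
    and nu_nz: "\<nu> \<noteq> 0"
begin

abbreviation "m \<equiv> Suc n"
definition "x = mv m U (evec m)"
definition "ee k = exp (\<i> * complex_of_real (th k))"

lemma F_Cn: "k \<in> {1..n} \<Longrightarrow> F k \<in> Cn n"
  using F unfolding orthonormal_basis_def by blast

lemma F_m: "k \<in> {1..n} \<Longrightarrow> F k m = 0"
  using F_Cn unfolding Cn_def by auto

lemma x_m: "x m = \<nu>"
  unfolding x_def dec using F_m by (simp add: evec_def)

lemma x_col: "x i = (if i \<in> {1..m} then U i m else 0)"
  unfolding x_def by (rule mv_evec) auto

lemma mu_eq: "k \<in> {1..n} \<Longrightarrow> cinner n x (F k) = \<mu> k"
proof -
  assume k: "k \<in> {1..n}"
  have "cinner n x (F k) = cinner n (\<lambda>i. \<Sum>l=1..n. \<mu> l * F l i) (F k)"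
    by (rule cinner_cong) (unfold x_def dec, simp add: evec_def)
  also have "\<dots> = \<mu> k" by (rule coef_onb[OF F k])
  finally show ?thesis .
qed

lemma x_norm: "cinner m x x = 1"
proof -
  have "cinner m x x = cinner m (evec m) (evec m)" unfolding x_def by (rule unitary_cinner[OF U])
  also have "\<dots> = 1" unfolding cinner_def by (simp add: evec_def)
  finally show ?thesis .
qed

lemma sum_mu: "(\<Sum>k=1..n. (cmod (\<mu> k))^2) = 1 - (cmod \<nu>)^2"
proof -
  have "cinner m x x = of_real (\<Sum>k=1..n. (cmod (\<mu> k))^2) + \<nu> * cnj \<nu>"
    unfolding cinner_Suc parseval_self[OF F] x_m by (simp add: mu_eq)
  moreover have eq: "\<nu> * cnj \<nu> = complex_of_real ((cmod \<nu>)^2)" by (rule complex_norm_square[symmetric])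
  ultimately have "1 = complex_of_real ((\<Sum>k=1..n. (cmod (\<mu> k))^2) + (cmod \<nu>)^2)"
    using x_norm by (metis of_real_add)
  hence "1 = (\<Sum>k=1..n. (cmod (\<mu> k))^2) + (cmod \<nu>)^2" using of_real_eq_1_iff by metis
  thus ?thesis by simp
qed

lemma sum_mu_pos: "(\<Sum>k=1..n. (cmod (\<mu> k))^2) > 0"
proof -
  have "1 \<in> {1..n}" using n1 by simp
  hence "(cmod (\<mu> 1))^2 > 0" using mu_nz by auto
  moreover have "(cmod (\<mu> 1))^2 \<le> (\<Sum>k=1..n. (cmod (\<mu> k))^2)"
    using \<open>1 \<in> {1..n}\<close> by (intro member_le_sum) auto
  ultimately show ?thesis by linarith
qed

lemma rho_lt1: "cmod \<nu> < 1"
proof -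
  have "(cmod \<nu>)^2 < 1" using sum_mu sum_mu_pos by linarith
  thus ?thesis by (simp add: power_less_one_iff abs_square_less_1)
qed

lemma nu_ne1: "\<nu> \<noteq> 1" using rho_lt1 by auto

lemma U_mm: "U m m \<noteq> 1" using x_col[of m] x_m nu_ne1 by simp

end

locale level = level0 +
  assumes PV: "Pp n U V"


lemma cinner_scale: "cinner n (\<lambda>i. a * p i) r = a * cinner n p r"
  unfolding cinner_def by (simp add: sum_distrib_left algebra_simps)

lemma cinner_add_scale_diff: "cinner n (\<lambda>i. p i + c * (q i - r i)) s = cinner n p s + c * (cinner n q s - cinner n r s)"
  unfolding cinner_def by (simp add: sum.distrib sum_subtractf sum_distrib_left algebra_simps)

context level begin

lemma V_last_row: "j \<in> {1..m} \<Longrightarrow> V m j = idm m j"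
  using Umat_out[OF V] by auto

lemma V_last_col: "i \<in> {1..n} \<Longrightarrow> V i m = 0"
  using Umat_out[OF V] by (auto simp: idm_def)

lemma mvV_m: "mv m V w m = w m"
proof -
  have "(\<Sum>j=1..m. V m j * w j) = (\<Sum>j=1..m. idm m j * w j)"
    by (intro sum.cong) (auto simp: V_last_row)
  also have "\<dots> = w m" by (simp add: idm_def if_distrib cong: if_cong)
  finally show ?thesis by (simp add: mv_def)
qed

lemma mvV_low:
  assumes i: "i \<in> {1..n}"
  shows "mv m V w i = (\<Sum>l=1..n. cinner n w (F l) * ee l * F l i)"
proof -
  have "mv m V w i = (\<Sum>j=1..n. V i j * w j)" using i by (simp add: mv_def V_last_col)
  also have "\<dots> = (\<Sum>j=1..n. V i j * (\<Sum>l=1..n. cinner n w (F l) * F l j))"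
    by (intro sum.cong refl) (metis cinner_restrict_expand[OF F])
  also have "\<dots> = mv n V (\<lambda>j. \<Sum>l=1..n. cinner n w (F l) * F l j) i" using i by (simp add: mv_def)
  also have "\<dots> = (\<Sum>l=1..n. cinner n w (F l) * mv n V (F l) i)" by (simp add: mv_sum)
  also have "\<dots> = (\<Sum>l=1..n. cinner n w (F l) * ee l * F l i)"
    by (intro sum.cong refl) (simp add: eig ee_def)
  finally show ?thesis .
qed

lemma eig_rel:
  assumes w: "w \<in> Cn m" and ew: "mv m U w = (\<lambda>i. l * w i)"
  shows "\<exists>c. (\<forall>k\<in>{1..n}. l * cinner n w (F k) = ee k * cinner n w (F k) + c * \<mu> k)
     \<and> l * w m = w m + c * (\<nu> - 1)
     \<and> l * ((\<Sum>k=1..n. cinner n w (F k) * cnj (\<mu> k)) + w m * cnj \<nu>) = w m"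
proof -
  obtain y where y: "y \<in> Cn m" "\<forall>i\<in>{1..n}. y i = 0"
      "(\<lambda>i. mv m U w i - mv m V w i) = (\<lambda>i. mv m U y i - y i)"
    using PV w unfolding Pp_def by blast
  define c where "c = y m"
  have yi: "y i = c * evec m i" for i
  proof (cases "i = m")
    case False
    have "y i = 0"
    proof (cases "i \<in> {1..n}")
      case True thus ?thesis using y(2) by blast
    next
      case False
      hence "i \<notin> {1..m}" using \<open>i \<noteq> m\<close> by auto
      thus ?thesis using y(1) by (auto simp: Cn_def)
    qed
    thus ?thesis using False by (simp add: evec_def)
  qed (simp add: evec_def c_def)
  have h: "l * w i = mv m V w i + c * (x i - evec m i)" for i
  proof -
    have "mv m U w i - mv m V w i = mv m U y i - y i" using fun_cong[OF y(3), of i] by simp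
    moreover have "mv m U y i = c * x i" using mv_last[OF y(2)] x_col c_def by simp
    ultimately show ?thesis using ew yi by (simp add: algebra_simps)
  qed
  have R2: "l * w m = w m + c * (\<nu> - 1)" using h[of m] mvV_m x_m by (simp add: evec_def)
  have R1: "l * cinner n w (F k) = ee k * cinner n w (F k) + c * \<mu> k" if k: "k \<in> {1..n}" for k
  proof -
    have "l * cinner n w (F k) = cinner n (\<lambda>i. l * w i) (F k)" by (simp add: cinner_scale)
    also have "\<dots> = cinner n (\<lambda>i. (\<Sum>l=1..n. (cinner n w (F l) * ee l) * F l i) + c * (x i - evec m i)) (F k)"
      by (rule cinner_cong) (simp add: h mvV_low)
    also have "\<dots> = cinner n w (F k) * ee k + c * (cinner n x (F k) - cinner n (evec m) (F k))"
      unfolding cinner_add_scale_diff coef_onb[OF F k] by simp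
    also have "cinner n (evec m) (F k) = 0" unfolding cinner_def by (simp add: evec_def)
    finally show ?thesis using mu_eq[OF k] by (simp add: mult.commute)
  qed
  have "cinner m (mv m U w) (mv m U (evec m)) = cinner m w (evec m)" by (rule unitary_cinner[OF U])
  also have "\<dots> = w m" unfolding cinner_def by (simp add: evec_def if_distrib cong: if_cong)
  finally have "cinner m (\<lambda>i. l * w i) x = w m" using ew x_def by simp
  hence "l * (cinner n w x + w m * cnj \<nu>) = w m" by (simp add: cinner_scale cinner_Suc x_m)
  moreover have "cinner n w x = (\<Sum>k=1..n. cinner n w (F k) * cnj (\<mu> k))"
    unfolding parseval[OF F, of w x] by (intro sum.cong refl) (simp add: mu_eq)
  ultimately have R3: "l * ((\<Sum>k=1..n. cinner n w (F k) * cnj (\<mu> k)) + w m * cnj \<nu>) = w m" by simp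
  show ?thesis using R1 R2 R3 by blast
qed

end


lemma expi_inj:
  assumes "0 \<le> a" "a < 2*pi" "0 \<le> b" "b < 2*pi"
    and e: "exp (\<i> * complex_of_real a) = exp (\<i> * complex_of_real b)"
  shows "a = b"
proof -
  have "cis a = cis b" using e by (simp add: cis_conv_exp)
  hence "cis (a - b) = 1" by (simp add: cis_divide[symmetric])
  hence "cos (a - b) = 1" by (metis cis.sel(1) one_complex.sel(1))
  then obtain k :: int where k: "a - b = k * 2 * pi" by (auto simp: cos_one_2pi_int)
  have "- 2*pi < k * 2 * pi" "k * 2 * pi < 2 * pi" using assms k by linarith+
  hence "(-1) * (2*pi) < real_of_int k * (2*pi)" "real_of_int k * (2*pi) < 1 * (2*pi)" by (simp_all add: mult.assoc)
  hence "-1 < real_of_int k" "real_of_int k < 1" using pi_gt_zero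
    by (metis mult_less_cancel_right_pos zero_less_mult_iff zero_less_numeral)+
  hence "k = 0" by linarith
  thus ?thesis using k by simp
qed

context level begin

lemma ee_ne1: "k \<in> {1..n} \<Longrightarrow> ee k \<noteq> 1"
proof
  assume k: "k \<in> {1..n}" and e: "ee k = 1"
  have t: "0 < th k" "th k < 2*pi" using th_range k by auto
  have "th k = 0" using expi_inj[of "th k" 0] t e by (simp add: ee_def)
  thus False using t by simp
qed

lemma ee_inj: "k \<in> {1..n} \<Longrightarrow> j \<in> {1..n} \<Longrightarrow> ee k = ee j \<Longrightarrow> k = j"
proof -
  assume k: "k \<in> {1..n}" and j: "j \<in> {1..n}" and e: "ee k = ee j"
  have t: "0 < th k" "th k < 2*pi" "0 < th j" "th j < 2*pi" using th_range k j by auto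
  have "th k = th j" using expi_inj[of "th k" "th j"] t e by (simp add: ee_def)
  thus "k = j" using th_mono k j by (metis less_irrefl nat_neq_iff)
qed

lemma cinner_zero_crit:
  assumes "\<forall>k\<in>{1..n}. cinner n w (F k) = 0" "w m = 0"
  shows "cinner m w w = 0"
  using assms unfolding cinner_Suc parseval_self[OF F] by simp

lemma eig_ne1:
  assumes w: "w \<in> Cn m" and ew: "mv m U w = (\<lambda>i. l * w i)" and nz: "cinner m w w \<noteq> 0"
  shows "l \<noteq> 1"
proof
  assume l: "l = 1"
  obtain c where R1: "\<forall>k\<in>{1..n}. l * cinner n w (F k) = ee k * cinner n w (F k) + c * \<mu> k"
     and R2: "l * w m = w m + c * (\<nu> - 1)"
     and R3: "l * ((\<Sum>k=1..n. cinner n w (F k) * cnj (\<mu> k)) + w m * cnj \<nu>) = w m"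
    using eig_rel[OF w ew] by blast
  have "c = 0" using R2 l nu_ne1 by simp
  have a0: "\<forall>k\<in>{1..n}. cinner n w (F k) = 0"
  proof
    fix k assume k: "k \<in> {1..n}"
    have "(1 - ee k) * cinner n w (F k) = 0" using R1 k l \<open>c = 0\<close> by (simp add: algebra_simps)
    thus "cinner n w (F k) = 0" using ee_ne1[OF k] by simp
  qed
  have "w m * (cnj \<nu> - 1) = 0" using R3 l a0 by (simp add: algebra_simps)
  moreover have "cnj \<nu> \<noteq> 1" using nu_ne1 by (metis complex_cnj_one_iff)
  ultimately have "w m = 0" by simp
  thus False using cinner_zero_crit[OF a0] nz by simp
qed

lemma eig_ne_ee:
  assumes w: "w \<in> Cn m" and ew: "mv m U w = (\<lambda>i. l * w i)" and nz: "cinner m w w \<noteq> 0"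
    and k0: "k0 \<in> {1..n}"
  shows "l \<noteq> ee k0"
proof
  assume l: "l = ee k0"
  obtain c where R1: "\<forall>k\<in>{1..n}. l * cinner n w (F k) = ee k * cinner n w (F k) + c * \<mu> k"
     and R2: "l * w m = w m + c * (\<nu> - 1)"
     and R3: "l * ((\<Sum>k=1..n. cinner n w (F k) * cnj (\<mu> k)) + w m * cnj \<nu>) = w m"
    using eig_rel[OF w ew] by blast
  have "l * cinner n w (F k0) = ee k0 * cinner n w (F k0) + c * \<mu> k0" using R1 k0 by blast
  hence "c * \<mu> k0 = 0" using l by simp
  hence c0: "c = 0" using mu_nz k0 by auto
  have "(l - 1) * w m = 0" using R2 c0 by (simp add: algebra_simps)
  hence b0: "w m = 0" using ee_ne1[OF k0] l by simp
  have ak: "cinner n w (F k) = 0" if k: "k \<in> {1..n}" "k \<noteq> k0" for k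
  proof -
    have "(l - ee k) * cinner n w (F k) = 0" using R1 k c0 by (simp add: algebra_simps)
    moreover have "l \<noteq> ee k" using ee_inj[OF k0 k(1)] l k by auto
    ultimately show ?thesis by simp
  qed
  have "l \<noteq> 0" using l by (simp add: ee_def)
  hence "(\<Sum>k=1..n. cinner n w (F k) * cnj (\<mu> k)) = 0" using R3 b0 by simp
  moreover have "(\<Sum>k=1..n. cinner n w (F k) * cnj (\<mu> k)) = cinner n w (F k0) * cnj (\<mu> k0)
      + (\<Sum>k\<in>{1..n}-{k0}. cinner n w (F k) * cnj (\<mu> k))"
    using k0 by (intro sum.remove) auto
  moreover have "(\<Sum>k\<in>{1..n}-{k0}. cinner n w (F k) * cnj (\<mu> k)) = 0"
    by (rule sum.neutral) (auto simp: ak)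
  ultimately have "cinner n w (F k0) * cnj (\<mu> k0) = 0" by simp
  hence "cinner n w (F k0) = 0" using mu_nz k0 by auto
  hence "\<forall>k\<in>{1..n}. cinner n w (F k) = 0" using ak by metis
  thus False using cinner_zero_crit b0 nz by blast
qed

end


context level begin

lemma eig_b0:
  assumes w: "w \<in> Cn m" and ew: "mv m U w = (\<lambda>i. l * w i)" and le: "\<forall>k\<in>{1..n}. l \<noteq> ee k"
    and b0: "w m = 0"
  shows "cinner m w w = 0"
proof -
  obtain c where R1: "\<forall>k\<in>{1..n}. l * cinner n w (F k) = ee k * cinner n w (F k) + c * \<mu> k"
     and R2: "l * w m = w m + c * (\<nu> - 1)"
    using eig_rel[OF w ew] by blast
  have c0: "c = 0" using R2 b0 nu_ne1 by simp
  have "\<forall>k\<in>{1..n}. cinner n w (F k) = 0"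
  proof
    fix k assume k: "k \<in> {1..n}"
    have "(l - ee k) * cinner n w (F k) = 0" using R1 k c0 by (simp add: algebra_simps)
    thus "cinner n w (F k) = 0" using le k by simp
  qed
  thus ?thesis using cinner_zero_crit b0 by blast
qed

lemma secular:
  assumes w: "w \<in> Cn m" and ew: "mv m U w = (\<lambda>i. l * w i)" and nz: "cinner m w w \<noteq> 0"
  shows "l * (\<Sum>k=1..n. \<mu> k * cnj (\<mu> k) / (l - ee k)) = (\<nu> - 1) * (1 - l * cnj \<nu>) / (l - 1)"
proof -
  have l1: "l \<noteq> 1" by (rule eig_ne1[OF w ew nz])
  have le: "\<forall>k\<in>{1..n}. l \<noteq> ee k" using eig_ne_ee[OF w ew nz] by blast
  obtain c where R1: "\<forall>k\<in>{1..n}. l * cinner n w (F k) = ee k * cinner n w (F k) + c * \<mu> k"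
     and R2: "l * w m = w m + c * (\<nu> - 1)"
     and R3: "l * ((\<Sum>k=1..n. cinner n w (F k) * cnj (\<mu> k)) + w m * cnj \<nu>) = w m"
    using eig_rel[OF w ew] by blast
  have ak: "cinner n w (F k) = c * \<mu> k / (l - ee k)" if k: "k \<in> {1..n}" for k
  proof -
    have "(l - ee k) * cinner n w (F k) = c * \<mu> k" using R1 k by (simp add: algebra_simps)
    moreover have "l - ee k \<noteq> 0" using le k by simp
    ultimately show ?thesis by (simp add: field_simps)
  qed
  have bm: "w m = c * (\<nu> - 1) / (l - 1)"
  proof -
    have "(l - 1) * w m = c * (\<nu> - 1)" using R2 by (simp add: algebra_simps)
    thus ?thesis using l1 by (simp add: field_simps)
  qed
  have c0: "c \<noteq> 0"
  proof
    assume "c = 0"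
    hence "w m = 0" using bm by simp
    thus False using eig_b0[OF w ew le] nz by simp
  qed
  have "(\<Sum>k=1..n. cinner n w (F k) * cnj (\<mu> k)) = c * (\<Sum>k=1..n. \<mu> k * cnj (\<mu> k) / (l - ee k))"
    unfolding sum_distrib_left by (intro sum.cong refl) (simp add: ak)
  hence "l * (c * (\<Sum>k=1..n. \<mu> k * cnj (\<mu> k) / (l - ee k)) + c * (\<nu> - 1) / (l - 1) * cnj \<nu>) = c * (\<nu> - 1) / (l - 1)"
    using R3 bm by simp
  hence "c * (l * (\<Sum>k=1..n. \<mu> k * cnj (\<mu> k) / (l - ee k))) = c * ((\<nu> - 1) * (1 - l * cnj \<nu>) / (l - 1))"
    using l1 by (simp add: field_simps)
  thus ?thesis using c0 by (metis mult_left_cancel times_divide_eq_right)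
qed

end

lemma cos_cis: "complex_of_real (cos x) = (cis x + 1 / (cis x)) / 2"
proof -
  have "1 / cis x = cis (-x)" by (simp add: divide_inverse cis_inverse)
  thus ?thesis by (simp add: complex_eq_iff cis.ctr)
qed
lemma sin_cis: "complex_of_real (sin x) = (cis x - 1 / (cis x)) / (2 * \<i>)"
proof -
  have "1 / cis x = cis (-x)" by (simp add: divide_inverse cis_inverse)
  thus ?thesis by (simp add: complex_eq_iff cis.ctr)
qed
lemma phi_field:
  fixes w p r s :: complex
  assumes w0: "w \<noteq> 0" and p0: "p \<noteq> 0"
  shows "(1+r^2) * ((w + 1/w)/2) - 2*r*((w/p + p/w)/2) + (1-r^2) * ((w - 1/w)/(2*\<i>)) * s
     = ((1-r^2)/2 * (1 - \<i> * s) * (w^2 - 1) - (r * p - 1) * (1 - w^2 * r / p)) / w"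
proof -
  have "(1-r^2) * ((w - 1/w)/(2*\<i>)) * s = (1-r^2) * (- \<i> * s) * (w - 1/w) / 2"
    by (simp add: field_simps)
  thus ?thesis using w0 p0 by (simp add: field_simps) (simp add: algebra_simps power2_eq_square)
qed

lemma phi_id:
  fixes \<rho> \<psi> h S :: real
  shows "complex_of_real ((1+\<rho>\<^sup>2) * cos h - 2*\<rho>*cos (h - \<psi>) + (1-\<rho>\<^sup>2) * sin h * S)
     = ((1-(of_real \<rho>)^2)/2 * (1 - \<i> * of_real S) * ((cis h)^2 - 1) - (of_real \<rho> * cis \<psi> - 1) * (1 - (cis h)^2 * of_real \<rho> / cis \<psi>)) / cis h"
proof -
  define w where "w = cis h"
  define p where "p = cis \<psi>"
  have w0: "w \<noteq> 0" and p0: "p \<noteq> 0" by (auto simp: w_def p_def)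
  have c1: "complex_of_real (cos h) = (w + 1/w)/2" using cos_cis[of h] by (simp add: w_def)
  have s1: "complex_of_real (sin h) = (w - 1/w)/(2*\<i>)" using sin_cis[of h] by (simp add: w_def)
  have c2: "complex_of_real (cos (h - \<psi>)) = (w/p + p/w)/2"
    using cos_cis[of "h - \<psi>"] by (simp add: w_def p_def cis_divide[symmetric])
  have "complex_of_real ((1+\<rho>\<^sup>2) * cos h - 2*\<rho>*cos (h - \<psi>) + (1-\<rho>\<^sup>2) * sin h * S)
     = (1+(of_real \<rho>)^2) * complex_of_real (cos h) - 2*of_real \<rho>*complex_of_real (cos (h - \<psi>))
       + (1-(of_real \<rho>)^2) * complex_of_real (sin h) * of_real S"
    by simp
  also have "\<dots> = ((1-(of_real \<rho>)^2)/2 * (1 - \<i> * of_real S) * (w^2 - 1) - (of_real \<rho> * p - 1) * (1 - w^2 * of_real \<rho> / p)) / w"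
    unfolding c1 s1 c2 by (rule phi_field[OF w0 p0])
  finally show ?thesis unfolding w_def p_def .
qed

lemma term_id:
  fixes \<eta> \<theta> :: real
  assumes s: "sin ((\<eta> - \<theta>)/2) \<noteq> 0"
  shows "cis \<eta> / (cis \<eta> - cis \<theta>) = 1/2 - \<i>/2 * complex_of_real (cot ((\<eta> - \<theta>)/2))"
proof -
  define z where "z = cis ((\<eta> - \<theta>)/2)"
  define e where "e = cis \<theta>"
  have z0: "z \<noteq> 0" and e0: "e \<noteq> 0" by (auto simp: z_def e_def)
  have eta: "cis \<eta> = e * z^2"
  proof -
    have "e * z^2 = cis \<theta> * (cis ((\<eta> - \<theta>)/2) * cis ((\<eta> - \<theta>)/2))" by (simp add: e_def z_def power2_eq_square)
    also have "\<dots> = cis (\<theta> + ((\<eta> - \<theta>)/2 + (\<eta> - \<theta>)/2))" by (simp only: cis_mult)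
    also have "\<theta> + ((\<eta> - \<theta>)/2 + (\<eta> - \<theta>)/2) = \<eta>" by (simp add: field_simps)
    finally show ?thesis by simp
  qed
  have c: "complex_of_real (cos ((\<eta> - \<theta>)/2)) = (z + 1/z)/2" using cos_cis by (simp add: z_def)
  have sn: "complex_of_real (sin ((\<eta> - \<theta>)/2)) = (z - 1/z)/(2*\<i>)" using sin_cis by (simp add: z_def)
  have zz: "z^2 \<noteq> 1"
  proof
    assume "z^2 = 1"
    hence "(z - 1/z) = 0" using z0 by (simp add: field_simps power2_eq_square)
    hence "complex_of_real (sin ((\<eta> - \<theta>)/2)) = 0" using sn by simp
    thus False using s by simp
  qed
  have cot: "complex_of_real (cot ((\<eta> - \<theta>)/2)) = \<i> * (z^2 + 1) / (z^2 - 1)"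
  proof -
    have "complex_of_real (cot ((\<eta> - \<theta>)/2)) = complex_of_real (cos ((\<eta> - \<theta>)/2)) / complex_of_real (sin ((\<eta> - \<theta>)/2))"
      by (simp add: cot_def)
    also have "\<dots> = \<i> * (z^2 + 1) / (z^2 - 1)"
      unfolding c sn using z0 zz by (simp add: field_simps power2_eq_square)
    finally show ?thesis .
  qed
  have "z^2 - 1 \<noteq> 0" using zz by simp
  thus ?thesis unfolding eta cot e_def[symmetric] using e0
    by (simp add: field_simps power2_eq_square)
qed


lemma sin_half_zero_cis:
  assumes "sin ((a - b)/2) = 0" shows "cis a = cis b"
proof -
  define c where "c = (a - b)/2"
  have s0: "sin c = 0" using assms by (simp add: c_def)
  have "cos c ^ 2 = 1" using s0 sin_cos_squared_add[of c] by simp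
  hence "cos (2*c) = 1" "sin (2*c) = 0" using s0 by (simp_all add: cos_double sin_double)
  hence "cis (2*c) = 1" by (simp add: complex_eq_iff)
  moreover have "cis a = cis b * cis (2*c)"
  proof -
    have "b + 2*c = a" by (simp add: c_def field_simps)
    thus ?thesis by (simp add: cis_mult)
  qed
  ultimately show ?thesis by simp
qed

context level begin

definition "\<rho> = cmod \<nu>"
definition "\<psi> = Arg \<nu>"
definition "\<gamma> k = (cmod (\<mu> k))\<^sup>2 / (1 - (cmod \<nu>)\<^sup>2)"
definition "Phi \<eta> = (1 + \<rho>\<^sup>2) * cos (\<eta> / 2) - 2 * \<rho> * cos (\<eta> / 2 - \<psi>)
                   + (1 - \<rho>\<^sup>2) * sin (\<eta> / 2) * (\<Sum>k=1..n. \<gamma> k * cot ((\<eta> - th k) / 2))"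

lemma rho_pos: "0 < \<rho>" using nu_nz by (simp add: \<rho>_def)
lemma rho_lt: "\<rho> < 1" using rho_lt1 by (simp add: \<rho>_def)
lemma one_m_rho: "1 - \<rho>\<^sup>2 > 0" using rho_pos rho_lt by (simp add: power_less_one_iff abs_square_less_1)

lemma ee_cis: "ee k = cis (th k)" by (simp add: ee_def cis_conv_exp)

lemma nu_polar: "\<nu> = of_real \<rho> * cis \<psi>"
  using rcis_cmod_Arg[of \<nu>] by (simp add: rcis_def \<rho>_def \<psi>_def)

lemma eig_root:
  assumes w: "w \<in> Cn m" and ew: "mv m U w = (\<lambda>i. cis t * w i)" and nz: "cinner m w w \<noteq> 0"
  shows "Phi t = 0"
proof -
  define l where "l = cis t"
  define S where "S = (\<Sum>k=1..n. \<gamma> k * cot ((t - th k) / 2))"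
  have ew': "mv m U w = (\<lambda>i. l * w i)" using ew by (simp add: l_def)
  have l1: "l \<noteq> 1" by (rule eig_ne1[OF w ew' nz])
  have le: "l \<noteq> ee k" if "k \<in> {1..n}" for k using eig_ne_ee[OF w ew' nz that] .
  have sn: "sin ((t - th k)/2) \<noteq> 0" if k: "k \<in> {1..n}" for k
    using sin_half_zero_cis[of t "th k"] le[OF k] by (auto simp: l_def ee_cis)
  have sec: "l * (\<Sum>k=1..n. \<mu> k * cnj (\<mu> k) / (l - ee k)) = (\<nu> - 1) * (1 - l * cnj \<nu>) / (l - 1)"
    by (rule secular[OF w ew' nz])
  have "l * (\<Sum>k=1..n. \<mu> k * cnj (\<mu> k) / (l - ee k))
      = (\<Sum>k=1..n. complex_of_real ((cmod (\<mu> k))\<^sup>2) * (l / (l - ee k)))"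
    unfolding sum_distrib_left
  proof (intro sum.cong refl)
    fix k
    have e: "\<mu> k * cnj (\<mu> k) = complex_of_real ((cmod (\<mu> k))\<^sup>2)" by (rule complex_norm_square[symmetric])
    show "l * (\<mu> k * cnj (\<mu> k) / (l - ee k)) = complex_of_real ((cmod (\<mu> k))\<^sup>2) * (l / (l - ee k))"
      unfolding e by (simp add: ac_simps)
  qed
  also have "\<dots> = (\<Sum>k=1..n. complex_of_real ((cmod (\<mu> k))\<^sup>2) * (1/2 - \<i>/2 * complex_of_real (cot ((t - th k)/2))))"
    by (intro sum.cong refl) (simp add: l_def ee_cis term_id[OF sn])
  also have "\<dots> = complex_of_real (\<Sum>k=1..n. (cmod (\<mu> k))\<^sup>2) / 2
       - \<i>/2 * complex_of_real (\<Sum>k=1..n. (cmod (\<mu> k))\<^sup>2 * cot ((t - th k)/2))"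
    by (simp add: sum_distrib_left sum_subtractf sum_divide_distrib algebra_simps)
  also have "(\<Sum>k=1..n. (cmod (\<mu> k))\<^sup>2 * cot ((t - th k)/2)) = (1 - \<rho>\<^sup>2) * S"
    unfolding S_def sum_distrib_left using one_m_rho
    by (intro sum.cong refl) (simp add: \<gamma>_def \<rho>_def)
  also have "(\<Sum>k=1..n. (cmod (\<mu> k))\<^sup>2) = 1 - \<rho>\<^sup>2" unfolding \<rho>_def by (rule sum_mu)
  finally have X: "l * (\<Sum>k=1..n. \<mu> k * cnj (\<mu> k) / (l - ee k)) = complex_of_real (1 - \<rho>\<^sup>2) / 2 - \<i> / 2 * complex_of_real ((1 - \<rho>\<^sup>2) * S)" .
  have lhs: "complex_of_real (1 - \<rho>\<^sup>2) / 2 - \<i> / 2 * complex_of_real ((1 - \<rho>\<^sup>2) * S)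
      = (\<nu> - 1) * (1 - l * cnj \<nu>) / (l - 1)" using trans[OF X[symmetric] sec] .
  have lw: "l = (cis (t/2))^2"
  proof -
    have "(cis (t/2))^2 = cis (t/2 + t/2)" unfolding power2_eq_square by (rule cis_mult)
    also have "t/2 + t/2 = t" by simp
    finally show ?thesis by (simp add: l_def)
  qed
  define r where "r = complex_of_real \<rho>"
  define p where "p = cis \<psi>"
  define Sc where "Sc = complex_of_real S"
  have p0: "p \<noteq> 0" by (simp add: p_def)
  have nu_rp: "\<nu> = r * p" unfolding r_def p_def by (rule nu_polar)
  have cnu: "cnj \<nu> = r / p"
  proof -
    have "cnj \<nu> = cnj r * cnj p" by (simp add: nu_rp)
    also have "cnj r = r" by (simp add: r_def)
    also have "cnj p = 1 / p"
    proof -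
      have "1 / cis \<psi> = cis (-\<psi>)" by (simp add: divide_inverse cis_inverse)
      thus ?thesis by (simp add: p_def cis_cnj)
    qed
    finally show ?thesis by simp
  qed
  have L: "(1 - r^2) / 2 * (1 - \<i> * Sc) = (\<nu> - 1) * (1 - l * cnj \<nu>) / (l - 1)"
  proof -
    have "(1 - r^2) / 2 * (1 - \<i> * Sc) = complex_of_real (1 - \<rho>\<^sup>2) / 2 - \<i> / 2 * complex_of_real ((1 - \<rho>\<^sup>2) * S)"
      by (simp add: r_def Sc_def field_simps)
    also have "\<dots> = (\<nu> - 1) * (1 - l * cnj \<nu>) / (l - 1)" by (rule lhs)
    finally show ?thesis .
  qed
  have l10: "l - 1 \<noteq> 0" using l1 by simp
  have num: "(1 - r^2) / 2 * (1 - \<i> * Sc) * (l - 1) - (r * p - 1) * (1 - l * r / p) = 0"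
  proof -
    have "(1 - r^2) / 2 * (1 - \<i> * Sc) * (l - 1) = (\<nu> - 1) * (1 - l * cnj \<nu>)"
      unfolding L using l10 by simp
    also have "\<dots> = (r * p - 1) * (1 - l * r / p)" by (simp only: cnu) (simp add: nu_rp)
    finally show ?thesis by simp
  qed
  have "complex_of_real (Phi t) = ((1 - r^2) / 2 * (1 - \<i> * Sc) * (l - 1) - (r * p - 1) * (1 - l * r / p)) / cis (t/2)"
    unfolding Phi_def S_def[symmetric] phi_id r_def p_def Sc_def lw ..
  also have "\<dots> = 0" unfolding num by simp
  finally show ?thesis by simp
qed

end


lemma cot_strict:
  fixes a b :: real
  assumes ab: "a < b" "b - a < pi" and s: "sin a * sin b > 0"
  shows "cot b < cot a"
proof -
  have sa: "sin a \<noteq> 0" and sb: "sin b \<noteq> 0" using s by auto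
  have "cot a - cot b = (cos a * sin b - sin a * cos b) / (sin a * sin b)"
    using sa sb by (simp add: cot_def field_simps)
  also have "cos a * sin b - sin a * cos b = sin (b - a)" by (simp add: sin_diff)
  finally have e: "cot a - cot b = sin (b - a) / (sin a * sin b)" .
  have "sin (b - a) > 0" using ab by (intro sin_gt_zero) auto
  hence "cot a - cot b > 0" unfolding e using s by simp
  thus ?thesis by simp
qed

context level begin

definition "c0 = 1 + \<rho>\<^sup>2 - 2 * \<rho> * cos \<psi>"

lemma c0_pos: "c0 > 0"
proof -
  have "\<rho> * cos \<psi> \<le> \<rho>" using rho_pos by (simp add: mult_left_le)
  hence "c0 \<ge> (1 - \<rho>)\<^sup>2" by (simp add: c0_def power2_eq_square algebra_simps)
  moreover have "(1 - \<rho>)\<^sup>2 > 0" using rho_lt by simp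
  ultimately show ?thesis by linarith
qed

definition "g \<eta> = c0 * cot (\<eta>/2) - 2 * \<rho> * sin \<psi> + (1 - \<rho>\<^sup>2) * (\<Sum>k=1..n. \<gamma> k * cot ((\<eta> - th k) / 2))"

lemma Phi_g:
  assumes "0 < \<eta>" "\<eta> < 2*pi"
  shows "Phi \<eta> = sin (\<eta>/2) * g \<eta>"
proof -
  have "sin (\<eta>/2) > 0" using assms by (intro sin_gt_zero) auto
  hence "sin (\<eta>/2) * cot (\<eta>/2) = cos (\<eta>/2)" by (simp add: cot_def)
  thus ?thesis unfolding Phi_def g_def c0_def cos_diff
    by (simp add: algebra_simps)
qed

lemma Phi_0: "Phi 0 = c0"
  by (simp add: Phi_def c0_def)

lemma Phi_2pi: "Phi (2*pi) = - c0"
proof -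
  have "cos (pi - \<psi>) = - cos \<psi>" by (simp add: cos_diff)
  thus ?thesis by (simp add: Phi_def c0_def)
qed

lemma gamma_nonneg: "\<gamma> k \<ge> 0"
  using one_m_rho by (simp add: \<gamma>_def \<rho>_def)

lemma g_strict:
  assumes e: "0 < \<eta>1" "\<eta>1 < \<eta>2" "\<eta>2 < 2*pi"
    and gap: "\<forall>k\<in>{1..n}. th k < \<eta>1 \<or> \<eta>2 < th k"
  shows "g \<eta>2 < g \<eta>1"
proof -
  have c: "cot (\<eta>2/2) < cot (\<eta>1/2)"
  proof (rule cot_strict)
    have "sin (\<eta>1/2) > 0" "sin (\<eta>2/2) > 0" using e by (auto intro!: sin_gt_zero)
    thus "sin (\<eta>1/2) * sin (\<eta>2/2) > 0" by simp
  qed (use e in auto)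
  have t: "\<gamma> k * cot ((\<eta>2 - th k) / 2) \<le> \<gamma> k * cot ((\<eta>1 - th k) / 2)" if k: "k \<in> {1..n}" for k
  proof (rule mult_left_mono[OF _ gamma_nonneg], rule less_imp_le, rule cot_strict)
    have tk: "0 < th k" "th k < 2*pi" using th_range k by auto
    show "(\<eta>1 - th k) / 2 < (\<eta>2 - th k) / 2" using e by simp
    show "(\<eta>2 - th k) / 2 - (\<eta>1 - th k) / 2 < pi" using e by (simp add: field_simps)
    show "sin ((\<eta>1 - th k) / 2) * sin ((\<eta>2 - th k) / 2) > 0"
    proof (cases "th k < \<eta>1")
      case True
      have "sin ((\<eta>1 - th k) / 2) > 0" "sin ((\<eta>2 - th k) / 2) > 0"
        using True e tk by (auto intro!: sin_gt_zero)
      thus ?thesis by simp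
    next
      case False
      hence lt: "\<eta>2 < th k" using gap k by auto
      have "sin ((th k - \<eta>1) / 2) > 0" "sin ((th k - \<eta>2) / 2) > 0"
        using lt e tk by (auto intro!: sin_gt_zero)
      moreover have "sin ((\<eta>1 - th k) / 2) = - sin ((th k - \<eta>1) / 2)" "sin ((\<eta>2 - th k) / 2) = - sin ((th k - \<eta>2) / 2)"
        by (simp_all add: sin_minus[symmetric] minus_divide_left)
      ultimately show ?thesis by (simp add: mult_pos_pos)
    qed
  qed
  have s: "(\<Sum>k=1..n. \<gamma> k * cot ((\<eta>2 - th k) / 2)) \<le> (\<Sum>k=1..n. \<gamma> k * cot ((\<eta>1 - th k) / 2))"
    by (rule sum_mono) (rule t)
  have "(1 - \<rho>\<^sup>2) * (\<Sum>k=1..n. \<gamma> k * cot ((\<eta>2 - th k) / 2)) \<le> (1 - \<rho>\<^sup>2) * (\<Sum>k=1..n. \<gamma> k * cot ((\<eta>1 - th k) / 2))"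
    using s one_m_rho by (intro mult_left_mono) auto
  moreover have "c0 * cot (\<eta>2/2) < c0 * cot (\<eta>1/2)" using c c0_pos by simp
  ultimately show ?thesis unfolding g_def by linarith
qed

lemma Phi_two_roots:
  assumes e: "0 < \<eta>1" "\<eta>1 < \<eta>2" "\<eta>2 < 2*pi"
    and gap: "\<forall>k\<in>{1..n}. th k < \<eta>1 \<or> \<eta>2 < th k"
    and z: "Phi \<eta>1 = 0" "Phi \<eta>2 = 0"
  shows False
proof -
  have "sin (\<eta>1/2) > 0" "sin (\<eta>2/2) > 0" using e by (auto intro!: sin_gt_zero)
  hence "g \<eta>1 = 0" "g \<eta>2 = 0" using z Phi_g e by auto
  thus False using g_strict[OF e gap] by simp
qed

end


context level begin

definition "T k = (if k = 0 then 0 else if k = Suc n then 2*pi else th k)"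

lemma T_strict: "i < j \<Longrightarrow> j \<le> Suc n \<Longrightarrow> T i < T j"
proof -
  assume ij: "i < j" "j \<le> Suc n"
  show "T i < T j"
  proof (cases "j = Suc n")
    case True
    thus ?thesis using ij th_range by (auto simp: T_def)
  next
    case False
    hence j: "j \<in> {1..n}" using ij by auto
    show ?thesis
    proof (cases "i = 0")
      case True thus ?thesis using j th_range by (auto simp: T_def)
    next
      case False
      hence "i \<in> {1..n}" using ij j by auto
      thus ?thesis using j th_mono ij False \<open>j \<noteq> Suc n\<close> by (auto simp: T_def)
    qed
  qed
qed

lemma T_mono: "i \<le> j \<Longrightarrow> j \<le> Suc n \<Longrightarrow> T i \<le> T j"
  using T_strict by (cases "i = j") (auto simp: less_imp_le le_neq_implies_less)

lemma T_th: "k \<in> {1..n} \<Longrightarrow> T k = th k" by (simp add: T_def)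

lemma interval_exists:
  assumes "0 < t" "t < 2*pi" "\<forall>k\<in>{1..n}. t \<noteq> th k"
  shows "\<exists>k\<le>n. T k < t \<and> t < T (Suc k)"
proof -
  define K where "K = {k\<in>{0..n}. T k < t}"
  have fin: "finite K" and ne: "0 \<in> K" using assms by (auto simp: K_def T_def)
  define k where "k = Max K"
  have kK: "k \<in> K" using fin ne unfolding k_def by (intro Max_in) auto
  hence kn: "k \<le> n" and Tk: "T k < t" by (auto simp: K_def)
  have "t < T (Suc k)"
  proof (cases "k = n")
    case True thus ?thesis using assms by (simp add: T_def)
  next
    case False
    hence k1: "Suc k \<in> {1..n}" using kn by auto
    have "Suc k \<notin> K"
    proof
      assume "Suc k \<in> K"
      hence "Suc k \<le> k" unfolding k_def using Max_ge[OF fin] by blast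
      thus False by simp
    qed
    hence "\<not> T (Suc k) < t" using k1 by (auto simp: K_def)
    moreover have "T (Suc k) \<noteq> t" using assms(3) k1 T_th by metis
    ultimately show ?thesis by linarith
  qed
  thus ?thesis using kn Tk by blast
qed

lemma gap:
  assumes k: "k \<le> n" and a: "T k < a" "a \<le> b" "b < T (Suc k)"
  shows "\<forall>l\<in>{1..n}. th l < a \<or> b < th l"
proof
  fix l assume l: "l \<in> {1..n}"
  show "th l < a \<or> b < th l"
  proof (cases "l \<le> k")
    case True
    hence "T l \<le> T k" using T_mono k by auto
    thus ?thesis using a T_th[OF l] by auto
  next
    case False
    hence "T (Suc k) \<le> T l" using T_mono l by auto
    thus ?thesis using a T_th[OF l] by auto
  qed
qed

lemma strict_idx:
  fixes f :: "nat \<Rightarrow> nat"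
  assumes mono: "\<And>i j. 1 \<le> i \<Longrightarrow> i < j \<Longrightarrow> j \<le> Suc N \<Longrightarrow> f i < f j"
    and bound: "\<And>j. 1 \<le> j \<Longrightarrow> j \<le> Suc N \<Longrightarrow> f j \<le> N"
    and j: "1 \<le> j" "j \<le> Suc N"
  shows "f j = j - 1"
proof -
  have lo: "f j \<ge> j - 1" if "1 \<le> j" "j \<le> Suc N" for j
    using that
  proof (induction j)
    case 0 thus ?case by simp
  next
    case (Suc j)
    show ?case
    proof (cases "j = 0")
      case True thus ?thesis by simp
    next
      case False
      hence "f j \<ge> j - 1" using Suc by auto
      moreover have "f j < f (Suc j)" using mono[of j "Suc j"] Suc False by auto
      ultimately show ?thesis by simp
    qed
  qed
  have hi: "f (Suc N - d) + d \<le> N" if "d \<le> N" for d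
    using that
  proof (induction d)
    case 0 thus ?case using bound by simp
  next
    case (Suc d)
    have "f (Suc N - Suc d) < f (Suc N - d)" using mono[of "Suc N - Suc d" "Suc N - d"] Suc by auto
    thus ?case using Suc by simp
  qed
  have "f j + (Suc N - j) \<le> N" using hi[of "Suc N - j"] j by simp
  thus ?thesis using lo[OF j] j by simp
qed

end


context level begin

lemma level_result:
  fixes G :: "nat \<Rightarrow> nat \<Rightarrow> complex" and t :: "nat \<Rightarrow> real"
  assumes G: "orthonormal_basis m G"
    and Geig: "\<forall>j\<in>{1..m}. mv m U (G j) = (\<lambda>i. exp (\<i> * complex_of_real (t j)) * G j i)"
    and t_range: "\<forall>j\<in>{1..m}. 0 \<le> t j \<and> t j < 2*pi"
    and t_sorted: "\<forall>j\<in>{1..m}. \<forall>j'\<in>{1..m}. j \<le> j' \<longrightarrow> t j \<le> t j'"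
  shows "0 < t 1 \<and> t m < 2*pi \<and> (\<forall>k\<in>{1..n}. t k < th k \<and> th k < t (Suc k))
    \<and> (\<forall>\<eta>. 0 \<le> \<eta> \<and> \<eta> \<le> 2*pi \<and> (\<forall>k\<in>{1..n}. \<eta> \<noteq> th k) \<longrightarrow> (Phi \<eta> = 0 \<longleftrightarrow> (\<exists>k\<in>{1..m}. \<eta> = t k)))"
proof -
  have GCn: "G j \<in> Cn m" if "j \<in> {1..m}" for j using G that unfolding orthonormal_basis_def by blast
  have Gorth: "cinner m (G j) (G j') = idm j j'" if "j \<in> {1..m}" "j' \<in> {1..m}" for j j'
    using G that unfolding orthonormal_basis_def by blast
  have Gnz: "cinner m (G j) (G j) \<noteq> 0" if "j \<in> {1..m}" for j using Gorth[OF that that] by (simp add: idm_def)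
  have Ge: "mv m U (G j) = (\<lambda>i. cis (t j) * G j i)" if "j \<in> {1..m}" for j
    using Geig that by (simp add: cis_conv_exp)
  have root: "Phi (t j) = 0" if "j \<in> {1..m}" for j using eig_root[OF GCn[OF that] Ge[OF that] Gnz[OF that]] .
  have tpos: "0 < t j" if j: "j \<in> {1..m}" for j
  proof -
    have "cis (t j) \<noteq> 1" using eig_ne1[OF GCn[OF j] Ge[OF j] Gnz[OF j]] .
    hence "t j \<noteq> 0" by auto
    thus ?thesis using t_range j by force
  qed
  have tlt: "t j < 2*pi" if j: "j \<in> {1..m}" for j using t_range j by blast
  have tne: "t j \<noteq> th k" if j: "j \<in> {1..m}" and k: "k \<in> {1..n}" for j k
  proof -
    have "cis (t j) \<noteq> ee k" using eig_ne_ee[OF GCn[OF j] Ge[OF j] Gnz[OF j] k] .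
    thus ?thesis by (auto simp: ee_cis)
  qed
  have tdist: "t j \<noteq> t j'" if j: "j \<in> {1..m}" and j': "j' \<in> {1..m}" and jj: "j \<noteq> j'" for j j'
  proof
    assume eq: "t j = t j'"
    define l where "l = cis (t j)"
    have e1: "mv m U (G j) = (\<lambda>i. l * G j i)" and e2: "mv m U (G j') = (\<lambda>i. l * G j' i)"
      using Ge[OF j] Ge[OF j'] eq by (simp_all add: l_def)
    have le: "\<forall>k\<in>{1..n}. l \<noteq> ee k" using eig_ne_ee[OF GCn[OF j] e1 Gnz[OF j]] by blast
    define b where "b = G j m"
    define b' where "b' = G j' m"
    have b0: "b \<noteq> 0"
    proof
      assume "b = 0"
      hence "cinner m (G j) (G j) = 0" using eig_b0[OF GCn[OF j] e1 le] by (simp add: b_def)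
      thus False using Gnz[OF j] by simp
    qed
    define w where "w = (\<lambda>i. b' * G j i + (- b) * G j' i)"
    have wCn: "w \<in> Cn m" using GCn[OF j] GCn[OF j'] by (auto simp: w_def Cn_def)
    have we: "mv m U w = (\<lambda>i. l * w i)"
      unfolding w_def mv_lin2 e1 e2 by (simp add: algebra_simps)
    have wm: "w m = 0" by (simp add: w_def b_def b'_def)
    have "cinner m w w = 0" by (rule eig_b0[OF wCn we le wm])
    hence wz: "\<And>i. i \<in> {1..m} \<Longrightarrow> w i = 0" using cinner_self_zero by blast
    have "cinner m w (G j') = 0" unfolding cinner_def by (simp add: wz)
    moreover have "cinner m w (G j') = b' * cinner m (G j) (G j') + (- b) * cinner m (G j') (G j')"
      unfolding w_def by (rule cinner_lin2)
    ultimately have "b = 0" using Gorth[OF j j'] Gorth[OF j' j'] jj by (simp add: idm_def)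
    thus False using b0 by simp
  qed
  have tinc: "t j < t j'" if "j \<in> {1..m}" "j' \<in> {1..m}" "j < j'" for j j'
    using t_sorted tdist that by (metis less_imp_le order_le_neq_trans less_irrefl)
  have ex_int: "\<exists>k\<le>n. T k < t j \<and> t j < T (Suc k)" if j: "j \<in> {1..m}" for j
    using interval_exists[of "t j"] tpos[OF j] tlt[OF j] tne[OF j] by blast
  obtain idx where idx: "\<And>j. j \<in> {1..m} \<Longrightarrow> idx j \<le> n \<and> T (idx j) < t j \<and> t j < T (Suc (idx j))"
    using ex_int by metis
  have idx_mono: "idx j < idx j'" if j: "1 \<le> j" and jj: "j < j'" and j': "j' \<le> m" for j j'
  proof -
    have jm: "j \<in> {1..m}" and jm': "j' \<in> {1..m}" using j jj j' by auto
    have lt: "t j < t j'" using tinc jm jm' jj by blast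
    note I = idx[OF jm] and I' = idx[OF jm']
    show ?thesis
    proof (rule ccontr)
      assume "\<not> idx j < idx j'"
      hence "idx j' \<le> idx j" by simp
      show False
      proof (cases "idx j' = idx j")
        case True
        have "\<forall>l\<in>{1..n}. th l < t j \<or> t j' < th l"
          using gap[of "idx j" "t j" "t j'"] I I' True lt by auto
        thus False using Phi_two_roots[of "t j" "t j'"] root jm jm' tpos lt tlt by auto
      next
        case False
        hence "Suc (idx j') \<le> idx j" using \<open>idx j' \<le> idx j\<close> by simp
        hence "T (Suc (idx j')) \<le> T (idx j)" using T_mono I by auto
        thus False using I I' lt by linarith
      qed
    qed
  qed
  have idx_eq: "idx j = j - 1" if "1 \<le> j" "j \<le> m" for j
    by (rule strict_idx[where N = n]) (use idx_mono idx that in auto)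
  have inter: "T (j - 1) < t j \<and> t j < T j" if j: "j \<in> {1..m}" for j
    using idx[OF j] idx_eq[of j] j by auto
  have part1: "\<forall>k\<in>{1..n}. t k < th k \<and> th k < t (Suc k)"
  proof
    fix k assume k: "k \<in> {1..n}"
    have "t k < T k" using inter[of k] k by auto
    moreover have "T k < t (Suc k)" using inter[of "Suc k"] k by auto
    ultimately show "t k < th k \<and> th k < t (Suc k)" using T_th[OF k] by simp
  qed
  have part2: "Phi \<eta> = 0 \<longleftrightarrow> (\<exists>k\<in>{1..m}. \<eta> = t k)"
    if e: "0 \<le> \<eta>" "\<eta> \<le> 2*pi" "\<forall>k\<in>{1..n}. \<eta> \<noteq> th k" for \<eta>
  proof
    assume z: "Phi \<eta> = 0"
    have "\<eta> \<noteq> 0" using z Phi_0 c0_pos by auto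
    moreover have "\<eta> \<noteq> 2*pi" using z Phi_2pi c0_pos by auto
    ultimately have e': "0 < \<eta>" "\<eta> < 2*pi" using e by auto
    obtain k where k: "k \<le> n" "T k < \<eta>" "\<eta> < T (Suc k)" using interval_exists[OF e' e(3)] by blast
    have km: "Suc k \<in> {1..m}" using k by auto
    have it: "T k < t (Suc k)" "t (Suc k) < T (Suc k)" using inter[OF km] by auto
    have "\<eta> = t (Suc k)"
    proof (rule ccontr)
      assume ne: "\<eta> \<noteq> t (Suc k)"
      show False
      proof (cases "\<eta> < t (Suc k)")
        case True
        have "\<forall>l\<in>{1..n}. th l < \<eta> \<or> t (Suc k) < th l" using gap[of k \<eta> "t (Suc k)"] k it True by auto
        thus False using Phi_two_roots[of \<eta> "t (Suc k)"] e' True tlt[OF km] z root[OF km] by auto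
      next
        case False
        hence lt: "t (Suc k) < \<eta>" using ne by auto
        have "\<forall>l\<in>{1..n}. th l < t (Suc k) \<or> \<eta> < th l" using gap[of k "t (Suc k)" \<eta>] k it lt by auto
        thus False using Phi_two_roots[of "t (Suc k)" \<eta>] e' lt tpos[OF km] z root[OF km] by auto
      qed
    qed
    thus "\<exists>k\<in>{1..m}. \<eta> = t k" using km by blast
  next
    assume "\<exists>k\<in>{1..m}. \<eta> = t k"
    thus "Phi \<eta> = 0" using root by auto
  qed
  have "0 < t 1" using tpos by simp
  moreover have "t m < 2*pi" using tlt by simp
  ultimately show ?thesis using part1 part2 by blast
qed

end


theorem proposition4p5:
  fixes u :: "nat \<Rightarrow> nat \<Rightarrow> nat \<Rightarrow> complex"
    and \<theta> :: "nat \<Rightarrow> nat \<Rightarrow> real"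
    and f :: "nat \<Rightarrow> nat \<Rightarrow> nat \<Rightarrow> complex"
    and \<mu> :: "nat \<Rightarrow> nat \<Rightarrow> complex"
    and \<nu> :: "nat \<Rightarrow> complex"
  assumes vi: "virtual_isometry u"
    and theta_range: "\<forall>n\<ge>1. \<forall>k\<in>{1..n}. 0 \<le> \<theta> n k \<and> \<theta> n k < 2 * pi"
    and theta_sorted: "\<forall>n\<ge>1. \<forall>k\<in>{1..n}. \<forall>l\<in>{1..n}. k \<le> l \<longrightarrow> \<theta> n k \<le> \<theta> n l"
    and f_onb: "\<forall>n\<ge>1. orthonormal_basis n (f n)"
    and f_eigen: "\<forall>n\<ge>1. \<forall>k\<in>{1..n}.
        mv n (u n) (f n k) = (\<lambda>i. exp (\<i> * complex_of_real (\<theta> n k)) * f n k i)"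
    and decomp: "\<forall>n\<ge>1. mv (n+1) (u (n+1)) (evec (n+1)) =
        (\<lambda>i. (\<Sum>k=1..n. \<mu> n k * f n k i) + \<nu> n * evec (n+1) i)"
    and u1: "u 1 \<noteq> idm"
    and nu_nz: "\<forall>n\<ge>1. \<nu> n \<noteq> 0"
    and mu_nz: "\<forall>n\<ge>1. \<forall>k\<in>{1..n}. \<mu> n k \<noteq> 0"
  shows "\<forall>n\<ge>1.
     (let \<rho> = cmod (\<nu> n); \<psi> = Arg (\<nu> n);
          \<gamma> = (\<lambda>k. (cmod (\<mu> n k))\<^sup>2 / (1 - (cmod (\<nu> n))\<^sup>2));
          \<Phi> = (\<lambda>\<eta>. (1 + \<rho>\<^sup>2) * cos (\<eta> / 2) - 2 * \<rho> * cos (\<eta> / 2 - \<psi>)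
                   + (1 - \<rho>\<^sup>2) * sin (\<eta> / 2) * (\<Sum>k=1..n. \<gamma> k * cot ((\<eta> - \<theta> n k) / 2)))
      in 0 < \<rho> \<and> \<rho> < 1 \<and> -pi < \<psi> \<and> \<psi> \<le> pi
         \<and> (\<Sum>k=1..n. \<gamma> k) = 1
         \<and> (\<forall>\<eta>. 0 \<le> \<eta> \<and> \<eta> \<le> 2 * pi \<and> (\<forall>k\<in>{1..n}. \<eta> \<noteq> \<theta> n k) \<longrightarrow>
                (\<Phi> \<eta> = 0 \<longleftrightarrow> (\<exists>k\<in>{1..n+1}. \<eta> = \<theta> (n+1) k)))
         \<and> 0 < \<theta> (n+1) 1 \<and> \<theta> (n+1) (n+1) < 2 * pi
         \<and> (\<forall>k\<in>{1..n}. \<theta> (n+1) k < \<theta> n k \<and> \<theta> n k < \<theta> (n+1) (k+1)))"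
proof -
  have vi': "\<And>n. n \<ge> 1 \<Longrightarrow> u n \<in> Umat n \<and> pi_proj (Suc n) n (u (Suc n)) = u n"
    using vi unfolding virtual_isometry_def by simp
  define Q where "Q n \<longleftrightarrow> (\<forall>k\<in>{1..n}. 0 < \<theta> n k \<and> \<theta> n k < 2*pi) \<and> (\<forall>k\<in>{1..n}. \<forall>l\<in>{1..n}. k < l \<longrightarrow> \<theta> n k < \<theta> n l)" for n
  have L0: "level0 n (u (Suc n)) (u n) (f n) (\<theta> n) (\<mu> n) (\<nu> n)" if n: "n \<ge> 1" and q: "Q n" for n
  proof
    show "1 \<le> n" by fact
    show "u (Suc n) \<in> Umat (Suc n)" using vi'[of "Suc n"] by simp
    show "u n \<in> Umat n" using vi' n by blast
    show "orthonormal_basis n (f n)" using f_onb n by blast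
    show "\<forall>k\<in>{1..n}. mv n (u n) (f n k) = (\<lambda>i. exp (\<i> * complex_of_real (\<theta> n k)) * f n k i)" using f_eigen n by blast
    show "mv (Suc n) (u (Suc n)) (evec (Suc n)) = (\<lambda>i. (\<Sum>k=1..n. \<mu> n k * f n k i) + \<nu> n * evec (Suc n) i)"
      using decomp n by simp
    show "\<forall>k\<in>{1..n}. 0 < \<theta> n k \<and> \<theta> n k < 2*pi" using q by (simp add: Q_def)
    show "\<forall>k\<in>{1..n}. \<forall>l\<in>{1..n}. k < l \<longrightarrow> \<theta> n k < \<theta> n l" using q by (simp add: Q_def)
    show "\<forall>k\<in>{1..n}. \<mu> n k \<noteq> 0" using mu_nz n by blast
    show "\<nu> n \<noteq> 0" using nu_nz n by blast
  qed
  have LV: "level n (u (Suc n)) (u n) (f n) (\<theta> n) (\<mu> n) (\<nu> n)" if n: "n \<ge> 1" and q: "Q n" for n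
  proof -
    interpret L0: level0 n "u (Suc n)" "u n" "f n" "\<theta> n" "\<mu> n" "\<nu> n" by (rule L0[OF n q])
    have "Pp n (u (Suc n)) (pi_proj (Suc n) n (u (Suc n)))"
      by (rule pi_proj_P[OF L0.U L0.U_mm])
    hence "Pp n (u (Suc n)) (u n)" using vi' n by simp
    thus ?thesis by unfold_locales
  qed
  have LR: "0 < \<theta> (Suc n) 1 \<and> \<theta> (Suc n) (Suc n) < 2*pi
      \<and> (\<forall>k\<in>{1..n}. \<theta> (Suc n) k < \<theta> n k \<and> \<theta> n k < \<theta> (Suc n) (Suc k))
      \<and> (\<forall>\<eta>. 0 \<le> \<eta> \<and> \<eta> \<le> 2*pi \<and> (\<forall>k\<in>{1..n}. \<eta> \<noteq> \<theta> n k) \<longrightarrow>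
          (level.Phi n (\<theta> n) (\<mu> n) (\<nu> n) \<eta> = 0 \<longleftrightarrow> (\<exists>k\<in>{1..Suc n}. \<eta> = \<theta> (Suc n) k)))"
    if n: "n \<ge> 1" and q: "Q n" for n
  proof -
    interpret L: level n "u (Suc n)" "u n" "f n" "\<theta> n" "\<mu> n" "\<nu> n" by (rule LV[OF n q])
    show ?thesis
    proof (rule L.level_result)
      show "orthonormal_basis (Suc n) (f (Suc n))" using f_onb by simp
      show "\<forall>j\<in>{1..Suc n}. mv (Suc n) (u (Suc n)) (f (Suc n) j) = (\<lambda>i. exp (\<i> * complex_of_real (\<theta> (Suc n) j)) * f (Suc n) j i)"
        using f_eigen[rule_format, of "Suc n"] by simp
      show "\<forall>j\<in>{1..Suc n}. 0 \<le> \<theta> (Suc n) j \<and> \<theta> (Suc n) j < 2*pi"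
        using theta_range[rule_format, of "Suc n"] by simp
      show "\<forall>j\<in>{1..Suc n}. \<forall>j'\<in>{1..Suc n}. j \<le> j' \<longrightarrow> \<theta> (Suc n) j \<le> \<theta> (Suc n) j'"
        using theta_sorted[rule_format, of "Suc n"] by simp
    qed
  qed
  have Q1: "Q 1"
  proof -
    have U1: "u 1 \<in> Umat 1" using vi'[of 1] by simp
    have on: "orthonormal_basis 1 (f 1)" using f_onb by simp
    have "cinner 1 (f 1 1) (f 1 1) = 1" using on unfolding orthonormal_basis_def by (simp add: idm_def)
    hence f0: "f 1 1 1 \<noteq> 0" by (auto simp: cinner_def)
    have "mv 1 (u 1) (f 1 1) 1 = exp (\<i> * complex_of_real (\<theta> 1 1)) * f 1 1 1"
      using f_eigen[rule_format, of 1 1] by simp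
    hence "u 1 1 1 * f 1 1 1 = exp (\<i> * complex_of_real (\<theta> 1 1)) * f 1 1 1" by (simp add: mv_def)
    hence e: "u 1 1 1 = exp (\<i> * complex_of_real (\<theta> 1 1))" using f0 by simp
    have r: "0 \<le> \<theta> 1 1" "\<theta> 1 1 < 2*pi" using theta_range[rule_format, of 1 1] by auto
    have "\<theta> 1 1 \<noteq> 0"
    proof
      assume "\<theta> 1 1 = 0"
      hence "u 1 1 1 = 1" using e by simp
      hence "u 1 = idm"
      proof (intro ext)
        fix i j assume h: "u 1 1 1 = 1"
        show "u 1 i j = idm i j"
        proof (cases "i = 1 \<and> j = 1")
          case True thus ?thesis using h by (simp add: idm_def)
        next
          case False
          hence "i \<notin> {1..1} \<or> j \<notin> {1..1}" by auto
          thus ?thesis by (rule Umat_out[OF U1])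
        qed
      qed
      thus False using u1 by simp
    qed
    thus ?thesis using r by (auto simp: Q_def)
  qed
  have Qall: "Q n" if "n \<ge> 1" for n
    using that
  proof (induction n rule: nat_induct_at_least)
    case base thus ?case by (rule Q1)
  next
    case (Suc n)
    note R = LR[OF Suc.hyps Suc.IH]
    have sorted: "\<theta> (Suc n) j \<le> \<theta> (Suc n) j'" if "j \<in> {1..Suc n}" "j' \<in> {1..Suc n}" "j \<le> j'" for j j'
      using theta_sorted[rule_format, of "Suc n" j j'] that by simp
    have pos: "\<forall>k\<in>{1..Suc n}. 0 < \<theta> (Suc n) k \<and> \<theta> (Suc n) k < 2*pi"
    proof
      fix k assume k: "k \<in> {1..Suc n}"
      have "\<theta> (Suc n) 1 \<le> \<theta> (Suc n) k" using sorted[of 1 k] k by auto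
      moreover have "\<theta> (Suc n) k < 2*pi" using theta_range[rule_format, of "Suc n" k] k by simp
      ultimately show "0 < \<theta> (Suc n) k \<and> \<theta> (Suc n) k < 2*pi" using R by linarith
    qed
    have mono: "\<forall>k\<in>{1..Suc n}. \<forall>l\<in>{1..Suc n}. k < l \<longrightarrow> \<theta> (Suc n) k < \<theta> (Suc n) l"
    proof (intro ballI impI)
      fix k l assume k: "k \<in> {1..Suc n}" and l: "l \<in> {1..Suc n}" and kl: "k < l"
      have kn: "k \<in> {1..n}" using k l kl by auto
      have "\<theta> (Suc n) k < \<theta> (Suc n) (Suc k)" using R kn by fastforce
      moreover have "\<theta> (Suc n) (Suc k) \<le> \<theta> (Suc n) l" using sorted[of "Suc k" l] kl l kn by auto
      ultimately show "\<theta> (Suc n) k < \<theta> (Suc n) l" by linarith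
    qed
    show ?case using pos mono by (simp add: Q_def)
  qed
  show ?thesis
  proof (intro allI impI)
    fix n :: nat assume n: "n \<ge> 1"
    have q: "Q n" by (rule Qall[OF n])
    interpret L: level n "u (Suc n)" "u n" "f n" "\<theta> n" "\<mu> n" "\<nu> n" by (rule LV[OF n q])
    note R = LR[OF n q]
    have g: "(\<Sum>k=1..n. (cmod (\<mu> n k))\<^sup>2 / (1 - (cmod (\<nu> n))\<^sup>2)) = 1"
    proof -
      have "(\<Sum>k=1..n. (cmod (\<mu> n k))\<^sup>2 / (1 - (cmod (\<nu> n))\<^sup>2)) = (\<Sum>k=1..n. (cmod (\<mu> n k))\<^sup>2) / (1 - (cmod (\<nu> n))\<^sup>2)"
        by (simp add: sum_divide_distrib)
      also have "\<dots> = 1" using L.sum_mu L.one_m_rho by (simp add: L.\<rho>_def)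
      finally show ?thesis .
    qed
    show "let \<rho> = cmod (\<nu> n); \<psi> = Arg (\<nu> n);
          \<gamma> = (\<lambda>k. (cmod (\<mu> n k))\<^sup>2 / (1 - (cmod (\<nu> n))\<^sup>2));
          \<Phi> = (\<lambda>\<eta>. (1 + \<rho>\<^sup>2) * cos (\<eta> / 2) - 2 * \<rho> * cos (\<eta> / 2 - \<psi>)
                   + (1 - \<rho>\<^sup>2) * sin (\<eta> / 2) * (\<Sum>k=1..n. \<gamma> k * cot ((\<eta> - \<theta> n k) / 2)))
      in 0 < \<rho> \<and> \<rho> < 1 \<and> -pi < \<psi> \<and> \<psi> \<le> pi
         \<and> (\<Sum>k=1..n. \<gamma> k) = 1
         \<and> (\<forall>\<eta>. 0 \<le> \<eta> \<and> \<eta> \<le> 2 * pi \<and> (\<forall>k\<in>{1..n}. \<eta> \<noteq> \<theta> n k) \<longrightarrow>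
                (\<Phi> \<eta> = 0 \<longleftrightarrow> (\<exists>k\<in>{1..n+1}. \<eta> = \<theta> (n+1) k)))
         \<and> 0 < \<theta> (n+1) 1 \<and> \<theta> (n+1) (n+1) < 2 * pi
         \<and> (\<forall>k\<in>{1..n}. \<theta> (n+1) k < \<theta> n k \<and> \<theta> n k < \<theta> (n+1) (k+1))"
      unfolding Let_def
      using R g L.rho_pos L.rho_lt Arg_bounded[of "\<nu> n"]
      unfolding L.Phi_def L.\<rho>_def L.\<psi>_def L.\<gamma>_def by simp
  qed
qed


end
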